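(* Let $\mu$ be a freely infinitely divisible probability measure on $\mathbf{R}$ with free generating pair $(\gamma,\sigma)$, so that $\phi_\mu(z)=\gamma+\int_{\mathbf{R}}\frac{1+xz}{z-x}\,d\sigma(x)$ for $z\in\mathbf{C}^+$. Let $T>0$. Then the following are equivalent: (1) $\int_{\mathbf{R}}\log(1+x^2)\,d\mu(x)<\infty$; (2) $\int_{\mathbf{R}}\log(1+x^2)\,d\sigma(x)<\infty$; (3) $\int_T^\infty\frac{-\Im\phi_\mu(\mathrm{i}y)}{y^2}\,dy<\infty$; (4) $\int_0^{1/T}\Im R_\mu(\mathrm{i}y)\,dy<\infty$; (5) $\int_T^\infty\frac{\Im F_\mu(\mathrm{i}y)-y}{y^2}\,dy<\infty$.
   Context: For a probability measure $\mu$ on $\mathbf{R}$, $G_\mu(z)=\int\frac{d\mu(t)}{z-t}$ and $F_\mu=1/G_\mu$ on $\mathbf{C}^+$; the Voiculescu transform is $\phi_\mu(z)=F_\mu^{\langle-1\rangle}(z)-z$ on a truncated cone in $\mathbf{C}^+$. $\mu$ is freely infinitely divisible iff $\phi_\mu$ extends analytically to $\mathbf{C}^+$ with values in $\mathbf{C}^-\cup\mathbf{R}$, in which case there are unique $\gamma\in\mathbf{R}$ and finite positive Borel $\sigma$ giving the displayed representation (the free generating pair). Functions on $\mathbf{C}^+$ are extended to $\mathbf{C}^-$ by $f(z)=\overline{f(\bar z)}$. The $R$-transform is $R_\mu(w)=\phi_\mu(1/w)$; thus for $y>0$, $R_\mu(\mathrm{i}y)=\phi_\mu(-\mathrm{i}/y)=\overline{\phi_\mu(\mathrm{i}/y)}$,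 so $\Im R_\mu(\mathrm{i}y)=-\Im\phi_\mu(\mathrm{i}/y)\ge0$. *)

theory Defs
  imports "HOL-Probability.Probability"
begin

definition cauchy_transform :: "real measure \<Rightarrow> complex \<Rightarrow> complex" where
  "cauchy_transform \<mu> z = integral\<^sup>L \<mu> (\<lambda>t. 1 / (z - complex_of_real t))"

definition F_transform :: "real measure \<Rightarrow> complex \<Rightarrow> complex" where
  "F_transform \<mu> z = 1 / cauchy_transform \<mu> z"

definition phi_repr :: "real \<Rightarrow> real measure \<Rightarrow> complex \<Rightarrow> complex" where
  "phi_repr \<gamma> \<sigma> z = complex_of_real \<gamma> +
     integral\<^sup>L \<sigma> (\<lambda>x. (1 + complex_of_real x * z) / (z - complex_of_real x))"

definition phi_ext :: "real \<Rightarrow> real measure \<Rightarrow> complex \<Rightarrow> complex" where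
  "phi_ext \<gamma> \<sigma> z = (if Im z > 0 then phi_repr \<gamma> \<sigma> z else cnj (phi_repr \<gamma> \<sigma> (cnj z)))"

definition R_transform :: "real \<Rightarrow> real measure \<Rightarrow> complex \<Rightarrow> complex" where
  "R_transform \<gamma> \<sigma> w = phi_ext \<gamma> \<sigma> (1 / w)"

text \<open>mu is a (Borel) probability measure on R which is freely infinitely divisible with
  free generating pair (gamma, sigma): sigma is a finite positive Borel measure and the
  Voiculescu transform phi_mu(z) = F_mu^{-1}(z) - z, on some truncated cone
  {z. Im z > beta, |Re z| < alpha Im z}, is given there by phi_repr gamma sigma
  (which is then its analytic extension to the upper half-plane).\<close>
definition free_generating_pair :: "real measure \<Rightarrow> real \<Rightarrow> real measure \<Rightarrow> bool" where
  "free_generating_pair \<mu> \<gamma> \<sigma> \<longleftrightarrow>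
     prob_space \<mu> \<and> sets \<mu> = sets borel \<and>
     finite_measure \<sigma> \<and> sets \<sigma> = sets borel \<and>
     (\<exists>\<alpha>>0. \<exists>\<beta>>0. \<forall>z. Im z > \<beta> \<and> \<bar>Re z\<bar> < \<alpha> * Im z \<longrightarrow>
        Im (z + phi_repr \<gamma> \<sigma> z) > 0 \<and> F_transform \<mu> (z + phi_repr \<gamma> \<sigma> z) = z)"

end

theory Submission
  imports Defs
begin

lemma tail_small:
  assumes "finite_measure N" "sets N = sets borel" "e > 0"
  shows "\<exists>M\<ge>1. measure N {x::real. M < \<bar>x\<bar>} < e"
proof -
  interpret finite_measure N by fact
  define A where "A = (\<lambda>n::nat. {x::real. real n < \<bar>x\<bar>})"
  have "A n \<in> sets borel" for n unfolding A_def by measurable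
  then have rs: "range A \<subseteq> sets N" unfolding assms(2) by blast
  have ds: "decseq A" unfolding A_def decseq_def by auto
  have em: "(\<Inter>i. A i) = {}"
  proof -
    { fix x :: real assume x: "x \<in> (\<Inter>i. A i)"
      obtain n where n: "\<bar>x\<bar> < real n" using reals_Archimedean2 by blast
      from x have "x \<in> A n" by blast
      with n have False unfolding A_def by simp }
    then show ?thesis by blast
  qed
  have "(\<lambda>n. measure N (A n)) \<longlonglongrightarrow> 0"
    using finite_Lim_measure_decseq[OF rs ds] em by simp
  from order_tendstoD(2)[OF this assms(3)]
  obtain n0 where n0: "\<And>n. n \<ge> n0 \<Longrightarrow> measure N (A n) < e"
    by (auto simp: eventually_sequentially)
  have "measure N (A (max n0 1)) < e" using n0 by simp
  moreover have "real (max n0 1) \<ge> 1" by simp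
  ultimately show ?thesis unfolding A_def by blast
qed

lemma ind_Ioi_AE:
  "AE y in lborel. (indicator {a<..} y :: ennreal) = indicator {a..} (y::real)"
  using AE_lborel_singleton[of a] by eventually_elim (auto simp: indicator_def)

lemma K_int:
  fixes a x :: real
  assumes a: "a > 0"
  shows "(\<integral>\<^sup>+y\<in>{a<..}. ennreal (x\<^sup>2 / (y * (y\<^sup>2 + x\<^sup>2))) \<partial>lborel) = ennreal (ln (1 + x\<^sup>2 / a\<^sup>2) / 2)"
proof -
  define F where "F = (\<lambda>y::real. ln y - ln (y\<^sup>2 + x\<^sup>2) / 2)"
  have "(\<integral>\<^sup>+y\<in>{a<..}. ennreal (x\<^sup>2 / (y * (y\<^sup>2 + x\<^sup>2))) \<partial>lborel)
      = (\<integral>\<^sup>+y. ennreal (x\<^sup>2 / (y * (y\<^sup>2 + x\<^sup>2))) * indicator {a..} y \<partial>lborel)"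
    by (rule nn_integral_cong_AE) (use ind_Ioi_AE[of a] in eventually_elim, simp)
  also have "\<dots> = ennreal (0 - F a)"
  proof (rule nn_integral_FTC_atLeast)
    show "(\<lambda>y. x\<^sup>2 / (y * (y\<^sup>2 + x\<^sup>2))) \<in> borel_measurable borel" by measurable
  next
    fix y :: real assume y: "a \<le> y"
    then have yp: "y > 0" using a by simp
    have p: "y\<^sup>2 + x\<^sup>2 > 0" using yp by (simp add: add_pos_nonneg)
    show "0 \<le> x\<^sup>2 / (y * (y\<^sup>2 + x\<^sup>2))" using yp p by simp
    show "(F has_real_derivative x\<^sup>2 / (y * (y\<^sup>2 + x\<^sup>2))) (at y)"
    proof -
      have e: "x * (x * y) + y * (y * y) = y * (y\<^sup>2 + x\<^sup>2)" "y * (y * y) + x * (x * y) = y * (y\<^sup>2 + x\<^sup>2)"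
        by (simp_all add: power2_eq_square algebra_simps)
      have "y * (y\<^sup>2 + x\<^sup>2) > 0" using yp p by simp
      then have nz: "x * (x * y) + y * (y * y) \<noteq> 0" "y * (y * y) + x * (x * y) \<noteq> 0"
        unfolding e using yp by simp_all
      show ?thesis unfolding F_def using yp p nz
        by (auto intro!: derivative_eq_intros simp: field_simps power2_eq_square)
    qed
  next
    have ev: "eventually (\<lambda>y. - (ln (1 + x\<^sup>2 / y\<^sup>2) / 2) = F y) at_top"
      using eventually_gt_at_top[of 0]
    proof eventually_elim
      case (elim y)
      have "ln (1 + x\<^sup>2 / y\<^sup>2) = ln ((y\<^sup>2 + x\<^sup>2) / y\<^sup>2)"
        using elim by (simp add: field_simps)
      also have "\<dots> = ln (y\<^sup>2 + x\<^sup>2) - ln (y\<^sup>2)"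
        using elim by (simp add: ln_div add_pos_nonneg)
      also have "ln (y\<^sup>2) = 2 * ln y" using elim by (simp add: ln_realpow)
      finally show ?case unfolding F_def by (simp add: field_simps)
    qed
    have sq: "filterlim (\<lambda>y::real. y\<^sup>2) at_infinity at_top"
      by (intro filterlim_at_top_imp_at_infinity filterlim_pow_at_top filterlim_ident) simp
    have "((\<lambda>y. x\<^sup>2 / y\<^sup>2) \<longlongrightarrow> 0) at_top"
      by (rule tendsto_divide_0[OF tendsto_const sq])
    then have "((\<lambda>y. 1 + x\<^sup>2 / y\<^sup>2) \<longlongrightarrow> 1) at_top"
      using tendsto_add[OF tendsto_const, of _ 0 at_top 1] by simp
    then have "((\<lambda>y. ln (1 + x\<^sup>2 / y\<^sup>2)) \<longlongrightarrow> ln 1) at_top"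
      by (intro tendsto_ln) auto
    then have "((\<lambda>y. - (ln (1 + x\<^sup>2 / y\<^sup>2) / 2)) \<longlongrightarrow> 0) at_top"
      using tendsto_minus[OF tendsto_divide[OF _ tendsto_const, of _ 0 at_top 2]] by simp
    then show "(F \<longlongrightarrow> 0) at_top" using ev by (rule Lim_transform_eventually)
  qed
  also have "0 - F a = ln (1 + x\<^sup>2 / a\<^sup>2) / 2"
  proof -
    have "ln (1 + x\<^sup>2 / a\<^sup>2) = ln ((a\<^sup>2 + x\<^sup>2) / a\<^sup>2)"
      using a by (simp add: field_simps)
    also have "\<dots> = ln (a\<^sup>2 + x\<^sup>2) - ln (a\<^sup>2)"
      using a by (simp add: ln_div add_pos_nonneg)
    also have "ln (a\<^sup>2) = 2 * ln a" using a by (simp add: ln_realpow)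
    finally show ?thesis unfolding F_def by (simp add: field_simps)
  qed
  finally show ?thesis .
qed

lemma cube_int:
  fixes a :: real
  assumes a: "a > 0"
  shows "(\<integral>\<^sup>+y\<in>{a<..}. ennreal (1 / y ^ 3) \<partial>lborel) = ennreal (1 / (2 * a\<^sup>2))"
proof -
  define F where "F = (\<lambda>y::real. - 1 / (2 * y\<^sup>2))"
  have "(\<integral>\<^sup>+y\<in>{a<..}. ennreal (1 / y ^ 3) \<partial>lborel)
      = (\<integral>\<^sup>+y. ennreal (1 / y ^ 3) * indicator {a..} y \<partial>lborel)"
    by (rule nn_integral_cong_AE) (use ind_Ioi_AE[of a] in eventually_elim, simp)
  also have "\<dots> = ennreal (0 - F a)"
  proof (rule nn_integral_FTC_atLeast)
    show "(\<lambda>y::real. 1 / y ^ 3) \<in> borel_measurable borel" by measurable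
  next
    fix y :: real assume y: "a \<le> y"
    then have yp: "y > 0" using a by simp
    show "0 \<le> 1 / y ^ 3" using yp by simp
    show "(F has_real_derivative 1 / y ^ 3) (at y)"
      unfolding F_def using yp
      by (auto intro!: derivative_eq_intros simp: field_simps power2_eq_square power3_eq_cube)
  next
    have sq: "filterlim (\<lambda>y::real. 2 * y\<^sup>2) at_infinity at_top"
      by (intro filterlim_at_top_imp_at_infinity filterlim_tendsto_pos_mult_at_top[OF tendsto_const]
           filterlim_pow_at_top filterlim_ident) simp_all
    have "((\<lambda>y::real. 1 / (2 * y\<^sup>2)) \<longlongrightarrow> 0) at_top"
      by (rule tendsto_divide_0[OF tendsto_const sq])
    then show "(F \<longlongrightarrow> 0) at_top" unfolding F_def
      using tendsto_minus by fastforce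
  qed
  also have "0 - F a = 1 / (2 * a\<^sup>2)" unfolding F_def by simp
  finally show ?thesis .
qed

lemma K_int0:
  fixes a x :: real
  assumes a: "a > 0"
  shows "(\<integral>\<^sup>+y\<in>{0<..<1/a}. ennreal (y * x\<^sup>2 / (1 + x\<^sup>2 * y\<^sup>2)) \<partial>lborel) = ennreal (ln (1 + x\<^sup>2 / a\<^sup>2) / 2)"
proof -
  define F where "F = (\<lambda>y::real. ln (1 + x\<^sup>2 * y\<^sup>2) / 2)"
  have ae: "AE y in lborel. (indicator {0<..<1/a} y :: ennreal) = indicator {0..1/a} y"
    using AE_lborel_singleton[of 0] AE_lborel_singleton[of "1/a"]
    by eventually_elim (auto split: split_indicator)
  have "(\<integral>\<^sup>+y\<in>{0<..<1/a}. ennreal (y * x\<^sup>2 / (1 + x\<^sup>2 * y\<^sup>2)) \<partial>lborel)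
      = (\<integral>\<^sup>+y. ennreal (y * x\<^sup>2 / (1 + x\<^sup>2 * y\<^sup>2)) * indicator {0..1/a} y \<partial>lborel)"
    by (rule nn_integral_cong_AE) (use ae in eventually_elim, simp)
  also have "\<dots> = ennreal (F (1/a) - F 0)"
  proof (rule nn_integral_FTC_Icc)
    show "(\<lambda>y. y * x\<^sup>2 / (1 + x\<^sup>2 * y\<^sup>2)) \<in> borel_measurable borel" by measurable
  next
    fix y :: real assume y: "y \<in> {0..1/a}"
    have p: "1 + x\<^sup>2 * y\<^sup>2 > 0" by (simp add: add_pos_nonneg)
    show "0 \<le> y * x\<^sup>2 / (1 + x\<^sup>2 * y\<^sup>2)" using y p by simp
    show "(F has_real_derivative y * x\<^sup>2 / (1 + x\<^sup>2 * y\<^sup>2)) (at y)"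
      unfolding F_def using p
      by (auto intro!: derivative_eq_intros simp: field_simps power2_eq_square)
  next
    show "0 \<le> 1 / a" using a by simp
  qed
  also have "F (1/a) - F 0 = ln (1 + x\<^sup>2 / a\<^sup>2) / 2" unfolding F_def
    by (simp add: power_divide)
  finally show ?thesis .
qed

lemma fin_dom_enn:
  fixes f g :: "'a \<Rightarrow> ennreal"
  assumes N: "finite_measure N" and g: "g \<in> borel_measurable N"
    and le: "\<And>x. x \<in> space N \<Longrightarrow> f x \<le> c * g x + d"
    and c: "c < \<infinity>" and d: "d < \<infinity>" and fin: "(\<integral>\<^sup>+x. g x \<partial>N) < \<infinity>"
  shows "(\<integral>\<^sup>+x. f x \<partial>N) < \<infinity>"
proof -
  interpret finite_measure N by fact
  have e: "emeasure N (space N) < \<infinity>" using emeasure_finite[of "space N"] by (simp add: less_top[symmetric])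
  have "(\<integral>\<^sup>+x. f x \<partial>N) \<le> (\<integral>\<^sup>+x. c * g x + d \<partial>N)"
    by (rule nn_integral_mono) (rule le)
  also have "\<dots> = c * (\<integral>\<^sup>+x. g x \<partial>N) + d * emeasure N (space N)"
    using g by (simp add: nn_integral_add nn_integral_cmult)
  also have "c * (\<integral>\<^sup>+x. g x \<partial>N) + d * emeasure N (space N) < \<infinity>"
    using c d fin e by (simp add: ennreal_mult_less_top)
  finally show ?thesis .
qed

lemma fin_cmp:
  fixes f g :: "real \<Rightarrow> ennreal"
  assumes g: "g \<in> borel_measurable borel" and TY: "T \<le> Y"
    and le1: "\<And>y. T < y \<Longrightarrow> y \<le> Y \<Longrightarrow> f y \<le> ennreal B"
    and le2: "\<And>y. Y < y \<Longrightarrow> f y \<le> ennreal C * g y"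
    and fin: "(\<integral>\<^sup>+y\<in>{T<..}. g y \<partial>lborel) < \<infinity>"
  shows "(\<integral>\<^sup>+y\<in>{T<..}. f y \<partial>lborel) < \<infinity>"
proof -
  have "(\<integral>\<^sup>+y\<in>{T<..}. f y \<partial>lborel)
      \<le> (\<integral>\<^sup>+y. ennreal B * indicator {T<..Y} y + ennreal C * (g y * indicator {T<..} y) \<partial>lborel)"
  proof (rule nn_integral_mono)
    fix y :: real
    show "f y * indicator {T<..} y \<le> ennreal B * indicator {T<..Y} y + ennreal C * (g y * indicator {T<..} y)"
    proof (cases "T < y")
      case True
      show ?thesis
      proof (cases "y \<le> Y")
        case True
        have "f y \<le> ennreal B" using le1[of y] \<open>T < y\<close> True by simp
        also have "\<dots> \<le> ennreal B + ennreal C * g y" by (rule add_increasing2) simp_all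
        finally show ?thesis using \<open>T < y\<close> True by (simp add: indicator_def)
      next
        case False
        with \<open>T < y\<close> show ?thesis using le2[of y] by (auto simp: indicator_def)
      qed
    qed (simp add: indicator_def)
  qed
  also have "\<dots> = ennreal B * emeasure lborel {T<..Y} + ennreal C * (\<integral>\<^sup>+y\<in>{T<..}. g y \<partial>lborel)"
    using g by (simp add: nn_integral_add nn_integral_cmult)
  also have "\<dots> < \<infinity>"
    using fin TY by (simp add: ennreal_mult_less_top)
  finally show ?thesis .
qed

lemma tonelli_swap:
  fixes f :: "real \<Rightarrow> real \<Rightarrow> ennreal"
  assumes M: "sigma_finite_measure M" and sM: "sets M = sets borel"
    and f: "(\<lambda>(x, y). f x y) \<in> borel_measurable (borel \<Otimes>\<^sub>M borel)"
  shows "(\<integral>\<^sup>+y. (\<integral>\<^sup>+x. f x y \<partial>M) \<partial>lborel) = (\<integral>\<^sup>+x. (\<integral>\<^sup>+y. f x y \<partial>lborel) \<partial>M)"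
proof -
  interpret M: sigma_finite_measure M by fact
  interpret pair_sigma_finite M lborel
    by (intro pair_sigma_finite.intro M lborel.sigma_finite_measure_axioms)
  have ss: "sets (M \<Otimes>\<^sub>M lborel) = sets (borel \<Otimes>\<^sub>M borel)"
    using sM by (intro sets_pair_measure_cong) simp_all
  have "(\<lambda>(x, y). f x y) \<in> borel_measurable (M \<Otimes>\<^sub>M lborel)"
    unfolding measurable_cong_sets[OF ss refl] by (rule f)
  then show ?thesis by (rule Fubini')
qed

lemma ln_cmp1:
  fixes x c :: real assumes "c > 0"
  shows "ln (1 + x\<^sup>2) \<le> ln (1 + x\<^sup>2 / c) + ln (1 + c)"
proof -
  have "1 + x\<^sup>2 \<le> (1 + x\<^sup>2 / c) * (1 + c)"
    using assms by (simp add: field_simps)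
  then have "ln (1 + x\<^sup>2) \<le> ln ((1 + x\<^sup>2 / c) * (1 + c))"
    using assms by (intro ln_le_cancel_iff[THEN iffD2]) (auto intro!: mult_pos_pos simp: add_pos_nonneg)
  also have "\<dots> = ln (1 + x\<^sup>2 / c) + ln (1 + c)"
    using assms by (intro ln_mult_pos) (auto simp: add_pos_nonneg)
  finally show ?thesis .
qed

lemma ln_cmp2:
  fixes x c :: real assumes "c > 0"
  shows "ln (1 + x\<^sup>2 / c) \<le> ln (1 + x\<^sup>2) + ln (1 + 1 / c)"
proof -
  have "1 + x\<^sup>2 / c \<le> (1 + x\<^sup>2) * (1 + 1 / c)"
    using assms by (simp add: field_simps)
  then have "ln (1 + x\<^sup>2 / c) \<le> ln ((1 + x\<^sup>2) * (1 + 1 / c))"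
    using assms by (intro ln_le_cancel_iff[THEN iffD2]) (auto intro!: mult_pos_pos simp: add_pos_nonneg)
  also have "\<dots> = ln (1 + x\<^sup>2) + ln (1 + 1 / c)"
    using assms by (intro ln_mult_pos) (auto simp: add_pos_nonneg)
  finally show ?thesis .
qed

lemma log_fin_iff:
  fixes N :: "real measure" and c :: real
  assumes N: "finite_measure N" "sets N = sets borel" and c: "c > 0"
  shows "(\<integral>\<^sup>+x. ennreal (ln (1 + x\<^sup>2 / c) / 2) \<partial>N) < \<infinity> \<longleftrightarrow> (\<integral>\<^sup>+x. ennreal (ln (1 + x\<^sup>2)) \<partial>N) < \<infinity>"
proof
  have m: "(\<lambda>x. ennreal (ln (1 + x\<^sup>2 / c) / 2)) \<in> borel_measurable N"
    "(\<lambda>x. ennreal (ln (1 + x\<^sup>2))) \<in> borel_measurable N"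
    using N(2) by (simp_all add: measurable_cong_sets[OF N(2) refl])
  show "(\<integral>\<^sup>+x. ennreal (ln (1 + x\<^sup>2)) \<partial>N) < \<infinity>" if "(\<integral>\<^sup>+x. ennreal (ln (1 + x\<^sup>2 / c) / 2) \<partial>N) < \<infinity>"
  proof (rule fin_dom_enn[OF N(1) m(1) _ _ _ that])
    fix x :: real
    define L where "L = ln (1 + x\<^sup>2 / c) / 2"
    have l0: "0 \<le> L" using c unfolding L_def by simp
    have "ln (1 + x\<^sup>2) \<le> 2 * L + ln (1 + c)" using ln_cmp1[OF c, of x] unfolding L_def by simp
    then have "ennreal (ln (1 + x\<^sup>2)) \<le> ennreal (2 * L + ln (1 + c))"
      by (rule ennreal_leI)
    also have "\<dots> = 2 * ennreal L + ennreal (ln (1 + c))"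
      using l0 c by (simp add: ennreal_plus ennreal_mult)
    finally show "ennreal (ln (1 + x\<^sup>2)) \<le> 2 * ennreal (ln (1 + x\<^sup>2 / c) / 2) + ennreal (ln (1 + c))"
      unfolding L_def .
  qed auto
  show "(\<integral>\<^sup>+x. ennreal (ln (1 + x\<^sup>2 / c) / 2) \<partial>N) < \<infinity>" if "(\<integral>\<^sup>+x. ennreal (ln (1 + x\<^sup>2)) \<partial>N) < \<infinity>"
  proof (rule fin_dom_enn[OF N(1) m(2) _ _ _ that])
    fix x :: real
    have l0: "0 \<le> ln (1 + x\<^sup>2)" by simp
    have "ln (1 + x\<^sup>2 / c) / 2 \<le> 1 * ln (1 + x\<^sup>2) + ln (1 + 1 / c)" proof -
      have a: "0 \<le> ln (1 + x\<^sup>2 / c)" using c by simp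
      have b: "0 \<le> ln (1 + 1 / c)" using c by simp
      show ?thesis using ln_cmp2[OF c, of x] a b by linarith
    qed
    then have "ennreal (ln (1 + x\<^sup>2 / c) / 2) \<le> ennreal (1 * ln (1 + x\<^sup>2) + ln (1 + 1 / c))"
      by (rule ennreal_leI)
    also have "\<dots> = 1 * ennreal (ln (1 + x\<^sup>2)) + ennreal (ln (1 + 1 / c))"
      using l0 c by (simp add: ennreal_plus)
    finally show "ennreal (ln (1 + x\<^sup>2 / c) / 2) \<le> 1 * ennreal (ln (1 + x\<^sup>2)) + ennreal (ln (1 + 1 / c))" .
  qed auto
qed

definition qf :: "real \<Rightarrow> real \<Rightarrow> complex" where
  "qf y x = (1 + complex_of_real x * (\<i> * complex_of_real y)) / (\<i> * complex_of_real y - complex_of_real x)"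

lemma qf_Im: "Im (qf y x) = - (y * (1 + x\<^sup>2) / (x\<^sup>2 + y\<^sup>2))"
proof -
  have "Im (qf y x) = (- (x * (x * y)) - y) / (x * x + y * y)"
    unfolding qf_def by (simp add: Im_divide power2_eq_square)
  also have "\<dots> = - (y * (1 + x\<^sup>2) / (x\<^sup>2 + y\<^sup>2))"
    by (simp add: power2_eq_square minus_divide_left algebra_simps)
  finally show ?thesis .
qed

lemma qf_Re: "Re (qf y x) = x * (y\<^sup>2 - 1) / (x\<^sup>2 + y\<^sup>2)"
  unfolding qf_def by (simp add: Re_divide field_simps power2_eq_square)

lemma frac1:
  fixes x y :: real assumes y: "y > 0"
  shows "(1 + x\<^sup>2) / (x\<^sup>2 + y\<^sup>2) \<le> 1 + 1 / y\<^sup>2"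
proof -
  have p: "0 < x\<^sup>2 + y\<^sup>2" using y by (simp add: add_nonneg_pos)
  have "(1 + x\<^sup>2) / (x\<^sup>2 + y\<^sup>2) = 1 / (x\<^sup>2 + y\<^sup>2) + x\<^sup>2 / (x\<^sup>2 + y\<^sup>2)"
    by (simp add: add_divide_distrib)
  moreover have "1 / (x\<^sup>2 + y\<^sup>2) \<le> 1 / y\<^sup>2"
    using y by (intro divide_left_mono) (auto simp: add_nonneg_pos)
  moreover have "x\<^sup>2 / (x\<^sup>2 + y\<^sup>2) \<le> 1"
    using p by (simp add: divide_le_eq_1)
  ultimately show ?thesis by linarith
qed

lemma frac2:
  fixes x y :: real assumes y: "y > 0"
  shows "\<bar>x\<bar> / (x\<^sup>2 + y\<^sup>2) \<le> 1 / y"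
proof -
  have p: "0 < x\<^sup>2 + y\<^sup>2" using y by (simp add: add_nonneg_pos)
  have "0 \<le> (\<bar>x\<bar> - y)\<^sup>2" by simp
  then have "2 * (\<bar>x\<bar> * y) \<le> x\<^sup>2 + y\<^sup>2"
    by (simp add: power2_diff power2_abs)
  moreover have "0 \<le> \<bar>x\<bar> * y" using y by simp
  ultimately have "\<bar>x\<bar> * y \<le> x\<^sup>2 + y\<^sup>2" by linarith
  then show ?thesis using p y by (simp add: field_simps)
qed

lemma qf_Im_abs: assumes "y > 0" shows "\<bar>Im (qf y x)\<bar> \<le> y + 1 / y"
proof -
  have "\<bar>Im (qf y x)\<bar> = y * ((1 + x\<^sup>2) / (x\<^sup>2 + y\<^sup>2))"
    using assms by (simp add: qf_Im abs_mult add_nonneg_nonneg)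
  also have "\<dots> \<le> y * (1 + 1 / y\<^sup>2)"
    using assms frac1[OF assms, of x] by (intro mult_left_mono) auto
  also have "\<dots> = y + 1 / y" using assms by (simp add: field_simps power2_eq_square)
  finally show ?thesis .
qed

lemma qf_Re_abs: assumes "y > 0" shows "\<bar>Re (qf y x)\<bar> \<le> y + 1 / y"
proof -
  have "\<bar>Re (qf y x)\<bar> = (\<bar>x\<bar> / (x\<^sup>2 + y\<^sup>2)) * \<bar>y\<^sup>2 - 1\<bar>"
    using assms by (simp add: qf_Re abs_mult)
  also have "\<dots> \<le> (1 / y) * (y\<^sup>2 + 1)"
    using frac2[OF assms, of x] assms by (intro mult_mono) (auto simp: abs_le_iff)
  also have "\<dots> = y + 1 / y" using assms by (simp add: field_simps power2_eq_square)
  finally show ?thesis .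
qed

lemma qf_Re_abs1: assumes "y \<ge> 1" shows "\<bar>Re (qf y x)\<bar> \<le> y"
proof -
  have y: "y > 0" using assms by simp
  have "\<bar>Re (qf y x)\<bar> = (\<bar>x\<bar> / (x\<^sup>2 + y\<^sup>2)) * \<bar>y\<^sup>2 - 1\<bar>"
    by (simp add: qf_Re abs_mult)
  also have "\<dots> \<le> (1 / y) * y\<^sup>2"
  proof (intro mult_mono)
    show "\<bar>y\<^sup>2 - 1\<bar> \<le> y\<^sup>2" using assms by (simp add: one_le_power)
  qed (use frac2[OF y, of x] y in auto)
  also have "\<dots> = y" using y by (simp add: power2_eq_square)
  finally show ?thesis .
qed

lemma qf_norm: assumes "y > 0" shows "norm (qf y x) \<le> 2 * (y + 1 / y)"
proof -
  define c where "c = y + 1 / y"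
  have "norm (qf y x) \<le> 2 * c"
    using cmod_le[of "qf y x"] qf_Re_abs[OF assms, of x] qf_Im_abs[OF assms, of x]
    unfolding c_def[symmetric] by linarith
  then show ?thesis unfolding c_def .
qed

lemma qf_meas[measurable]: "qf y \<in> borel_measurable borel"
  unfolding qf_def[abs_def] by measurable

lemma qf_integrable:
  assumes s: "finite_measure \<sigma>" "sets \<sigma> = sets borel" and y: "y > 0"
  shows "integrable \<sigma> (qf y)"
proof -
  interpret finite_measure \<sigma> by fact
  show ?thesis
  proof (rule integrable_const_bound[where B = "2 * (y + 1 / y)"])
    show "AE x in \<sigma>. norm (qf y x) \<le> 2 * (y + 1 / y)" using qf_norm[OF y] by simp
    show "qf y \<in> borel_measurable \<sigma>" unfolding measurable_cong_sets[OF s(2) refl] by simp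
  qed
qed

lemma phi_repr_qf: "phi_repr \<gamma> \<sigma> (\<i> * complex_of_real y) = complex_of_real \<gamma> + integral\<^sup>L \<sigma> (qf y)"
  unfolding phi_repr_def qf_def by simp

lemma phi_Im:
  assumes s: "finite_measure \<sigma>" "sets \<sigma> = sets borel" and y: "y > 0"
  shows "- Im (phi_repr \<gamma> \<sigma> (\<i> * complex_of_real y)) = (\<integral>x. y * (1 + x\<^sup>2) / (x\<^sup>2 + y\<^sup>2) \<partial>\<sigma>)"
proof -
  have "Im (integral\<^sup>L \<sigma> (qf y)) = (\<integral>x. Im (qf y x) \<partial>\<sigma>)"
    using integral_Im[OF qf_integrable[OF s y]] by simp
  then show ?thesis unfolding phi_repr_qf by (simp add: qf_Im)
qed

lemma phi_Re_bound:
  assumes s: "finite_measure \<sigma>" "sets \<sigma> = sets borel" and y: "y \<ge> 1"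
  shows "\<bar>Re (phi_repr \<gamma> \<sigma> (\<i> * complex_of_real y))\<bar> \<le> \<bar>\<gamma>\<bar> + measure \<sigma> (space \<sigma>) * y"
proof -
  interpret finite_measure \<sigma> by fact
  have y0: "y > 0" using y by simp
  have ii: "integrable \<sigma> (\<lambda>x. Re (qf y x))"
    using qf_integrable[OF s y0] by (rule integrable_bounded_linear[OF bounded_linear_Re])
  have "Re (integral\<^sup>L \<sigma> (qf y)) = (\<integral>x. Re (qf y x) \<partial>\<sigma>)"
    using integral_Re[OF qf_integrable[OF s y0]] by simp
  also have "\<bar>\<dots>\<bar> \<le> (\<integral>x. \<bar>Re (qf y x)\<bar> \<partial>\<sigma>)" by (rule integral_abs_bound)
  also have "\<dots> \<le> (\<integral>x. y \<partial>\<sigma>)"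
    by (intro integral_mono integrable_abs ii) (auto simp: qf_Re_abs1[OF y])
  also have "\<dots> = measure \<sigma> (space \<sigma>) * y" by simp
  finally have "\<bar>Re (integral\<^sup>L \<sigma> (qf y))\<bar> \<le> measure \<sigma> (space \<sigma>) * y" .
  then show ?thesis unfolding phi_repr_qf by simp
qed

lemma S_integrable:
  fixes \<sigma> :: "real measure" and y :: real
  assumes s: "finite_measure \<sigma>" "sets \<sigma> = sets borel" and y: "y > 0"
  shows "integrable \<sigma> (\<lambda>x. y * (1 + x\<^sup>2) / (x\<^sup>2 + y\<^sup>2))"
proof -
  interpret finite_measure \<sigma> by fact
  show ?thesis
  proof (rule integrable_const_bound[where B = "y * (1 + 1 / y\<^sup>2)"])
    show "AE x in \<sigma>. norm (y * (1 + x\<^sup>2) / (x\<^sup>2 + y\<^sup>2)) \<le> y * (1 + 1 / y\<^sup>2)"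
    proof (rule AE_I2)
      fix x :: real
      have "norm (y * (1 + x\<^sup>2) / (x\<^sup>2 + y\<^sup>2)) = y * ((1 + x\<^sup>2) / (x\<^sup>2 + y\<^sup>2))"
        using y by (simp add: abs_mult add_nonneg_nonneg)
      also have "\<dots> \<le> y * (1 + 1 / y\<^sup>2)"
        using y frac1[OF y, of x] by (intro mult_left_mono) auto
      finally show "norm (y * (1 + x\<^sup>2) / (x\<^sup>2 + y\<^sup>2)) \<le> y * (1 + 1 / y\<^sup>2)" .
    qed
    show "(\<lambda>x. y * (1 + x\<^sup>2) / (x\<^sup>2 + y\<^sup>2)) \<in> borel_measurable \<sigma>"
      unfolding measurable_cong_sets[OF s(2) refl] by measurable
  qed
qed

lemma S_small:
  fixes \<sigma> :: "real measure"
  assumes s: "finite_measure \<sigma>" "sets \<sigma> = sets borel"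
  shows "\<exists>Y0\<ge>1. \<forall>y\<ge>Y0. (\<integral>x. (1 + x\<^sup>2) / (x\<^sup>2 + y\<^sup>2) \<partial>\<sigma>) \<le> 1 / 2"
proof -
  interpret finite_measure \<sigma> by fact
  obtain M where M: "M \<ge> 1" "measure \<sigma> {x. M < \<bar>x\<bar>} < 1 / 4"
    using tail_small[OF s, of "1/4"] by auto
  define m where "m = measure \<sigma> (space \<sigma>)"
  have m0: "m \<ge> 0" unfolding m_def by simp
  define Y0 where "Y0 = 4 * (1 + M\<^sup>2) * (m + 1)"
  have Y0: "Y0 \<ge> 1"
  proof -
    have "1 \<le> 1 + M\<^sup>2" by simp
    moreover have "1 \<le> m + 1" using m0 by simp
    ultimately have "1 \<le> (1 + M\<^sup>2) * (m + 1)" by (metis mult_mono' mult_1 zero_le_one)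
    then show ?thesis unfolding Y0_def by linarith
  qed
  have A: "{x::real. M < \<bar>x\<bar>} \<in> sets \<sigma>" unfolding s(2) by measurable
  have "\<forall>y\<ge>Y0. (\<integral>x. (1 + x\<^sup>2) / (x\<^sup>2 + y\<^sup>2) \<partial>\<sigma>) \<le> 1 / 2"
  proof (intro allI impI)
    fix y assume yY: "y \<ge> Y0"
    then have y1: "y \<ge> 1" using Y0 by simp
    then have y0: "y > 0" by simp
    have int1: "integrable \<sigma> (\<lambda>x. (1 + x\<^sup>2) / (x\<^sup>2 + y\<^sup>2))"
    proof -
      have "integrable \<sigma> (\<lambda>x. y * (1 + x\<^sup>2) / (x\<^sup>2 + y\<^sup>2) / y)"
        using S_integrable[OF s y0] by (rule integrable_divide)
      moreover have "(\<lambda>x. y * (1 + x\<^sup>2) / (x\<^sup>2 + y\<^sup>2) / y) = (\<lambda>x. (1 + x\<^sup>2) / (x\<^sup>2 + y\<^sup>2))"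
        using y0 by (auto simp: fun_eq_iff)
      ultimately show ?thesis by simp
    qed
    have int2: "integrable \<sigma> (\<lambda>x. (1 + M\<^sup>2) / y\<^sup>2 + indicator {x. M < \<bar>x\<bar>} x)"
      using A by (intro Bochner_Integration.integrable_add integrable_const integrable_real_indicator)
        (auto simp: less_top[symmetric])
    have "(\<integral>x. (1 + x\<^sup>2) / (x\<^sup>2 + y\<^sup>2) \<partial>\<sigma>) \<le> (\<integral>x. (1 + M\<^sup>2) / y\<^sup>2 + indicator {x. M < \<bar>x\<bar>} x \<partial>\<sigma>)"
    proof (rule integral_mono[OF int1 int2])
      fix x :: real
      show "(1 + x\<^sup>2) / (x\<^sup>2 + y\<^sup>2) \<le> (1 + M\<^sup>2) / y\<^sup>2 + indicator {x. M < \<bar>x\<bar>} x"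
      proof (cases "M < \<bar>x\<bar>")
        case True
        have "(1 + x\<^sup>2) / (x\<^sup>2 + y\<^sup>2) \<le> 1"
        proof -
          have "1 \<le> y\<^sup>2" using y1 by (simp add: one_le_power)
          moreover have "0 < x\<^sup>2 + y\<^sup>2" using y0 by (simp add: add_nonneg_pos)
          ultimately show ?thesis by (simp add: divide_le_eq_1)
        qed
        moreover have "0 \<le> (1 + M\<^sup>2) / y\<^sup>2" by simp
        ultimately have "(1 + x\<^sup>2) / (x\<^sup>2 + y\<^sup>2) \<le> (1 + M\<^sup>2) / y\<^sup>2 + 1" by linarith
        then show ?thesis using True by (simp add: indicator_def)
      next
        case False
        have "\<bar>x\<bar> \<le> M" using False by simp
        then have "\<bar>x\<bar>\<^sup>2 \<le> M\<^sup>2" by (rule power_mono) simp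
        then have "x\<^sup>2 \<le> M\<^sup>2" by simp
        then have "(1 + x\<^sup>2) / (x\<^sup>2 + y\<^sup>2) \<le> (1 + M\<^sup>2) / y\<^sup>2"
          using y0 by (intro frac_le) auto
        then show ?thesis using False by (simp add: indicator_def)
      qed
    qed
    also have "\<dots> = (1 + M\<^sup>2) / y\<^sup>2 * m + measure \<sigma> {x. M < \<bar>x\<bar>}"
      using A by (subst Bochner_Integration.integral_add)
        (auto simp: m_def less_top[symmetric] sets.Int_space_eq2)
    also have "\<dots> \<le> 1 / 4 + 1 / 4"
    proof (intro add_mono)
      show "measure \<sigma> {x. M < \<bar>x\<bar>} \<le> 1 / 4" using M(2) by simp
      have "4 * ((1 + M\<^sup>2) * m) \<le> Y0" unfolding Y0_def using m0 by (simp add: algebra_simps)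
      also have "Y0 \<le> y" by fact
      also have "y \<le> y\<^sup>2" using y1 by (simp add: power2_eq_square)
      finally have "4 * ((1 + M\<^sup>2) * m) \<le> y\<^sup>2" .
      then show "(1 + M\<^sup>2) / y\<^sup>2 * m \<le> 1 / 4" using y0 by (simp add: field_simps)
    qed
    finally show "(\<integral>x. (1 + x\<^sup>2) / (x\<^sup>2 + y\<^sup>2) \<partial>\<sigma>) \<le> 1 / 2" by simp
  qed
  then show ?thesis using Y0 by blast
qed

lemma R_Im:
  fixes y :: real
  assumes y: "y > 0"
  shows "Im (R_transform \<gamma> \<sigma> (\<i> * complex_of_real y)) = - Im (phi_repr \<gamma> \<sigma> (\<i> * complex_of_real (1 / y)))"
proof -
  have "Im (1 / (\<i> * complex_of_real y)) = - 1 / y" using y by (simp add: Im_divide power2_eq_square)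
  then have n: "\<not> Im (1 / (\<i> * complex_of_real y)) > 0" using y by simp
  have c: "cnj (1 / (\<i> * complex_of_real y)) = \<i> * complex_of_real (1 / y)"
    using y by (simp add: complex_eq_iff Re_divide Im_divide)
  show ?thesis unfolding R_transform_def phi_ext_def using n c by simp
qed

lemma P3_iff:
  fixes \<sigma> :: "real measure" and \<gamma> T :: real
  assumes s: "finite_measure \<sigma>" "sets \<sigma> = sets borel" and T: "T > 0"
  shows "(\<integral>\<^sup>+y\<in>{T<..}. ennreal (- Im (phi_repr \<gamma> \<sigma> (\<i> * complex_of_real y)) / y\<^sup>2) \<partial>lborel) < \<infinity>
     \<longleftrightarrow> (\<integral>\<^sup>+x. ennreal (ln (1 + x\<^sup>2)) \<partial>\<sigma>) < \<infinity>"
proof -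
  interpret finite_measure \<sigma> by fact
  define g where "g = (\<lambda>x y::real. y * (1 + x\<^sup>2) / (x\<^sup>2 + y\<^sup>2) / y\<^sup>2)"
  define h where "h = (\<lambda>x y. ennreal (g x y) * indicator {T<..} y)"
  have pt: "ennreal (- Im (phi_repr \<gamma> \<sigma> (\<i> * complex_of_real y)) / y\<^sup>2) = (\<integral>\<^sup>+x. ennreal (g x y) \<partial>\<sigma>)"
    if y: "y > 0" for y
  proof -
    have "- Im (phi_repr \<gamma> \<sigma> (\<i> * complex_of_real y)) / y\<^sup>2 = (\<integral>x. g x y \<partial>\<sigma>)"
      unfolding phi_Im[OF s y] g_def by (rule integral_divide_zero[symmetric])
    also have "ennreal \<dots> = (\<integral>\<^sup>+x. ennreal (g x y) \<partial>\<sigma>)"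
    proof (rule nn_integral_eq_integral[symmetric])
      show "integrable \<sigma> (\<lambda>x. g x y)" unfolding g_def
        by (rule integrable_divide[OF S_integrable[OF s y]])
      show "AE x in \<sigma>. 0 \<le> g x y" using y unfolding g_def by (simp add: add_nonneg_nonneg)
    qed
    finally show ?thesis .
  qed
  have hm: "(\<lambda>(x, y). h x y) \<in> borel_measurable (borel \<Otimes>\<^sub>M borel)"
    unfolding h_def g_def by measurable
  have "(\<integral>\<^sup>+y\<in>{T<..}. ennreal (- Im (phi_repr \<gamma> \<sigma> (\<i> * complex_of_real y)) / y\<^sup>2) \<partial>lborel)
      = (\<integral>\<^sup>+y. (\<integral>\<^sup>+x. h x y \<partial>\<sigma>) \<partial>lborel)"
  proof (rule nn_integral_cong)
    fix y :: real
    show "ennreal (- Im (phi_repr \<gamma> \<sigma> (\<i> * complex_of_real y)) / y\<^sup>2) * indicator {T<..} y = (\<integral>\<^sup>+x. h x y \<partial>\<sigma>)"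
    proof (cases "T < y")
      case True
      then have y0: "y > 0" using T by simp
      have gm: "(\<lambda>x. ennreal (g x y)) \<in> borel_measurable \<sigma>"
        unfolding measurable_cong_sets[OF s(2) refl] g_def by measurable
      from pt[OF y0] have "ennreal (- Im (phi_repr \<gamma> \<sigma> (\<i> * complex_of_real y)) / y\<^sup>2) * indicator {T<..} y
          = (\<integral>\<^sup>+x. ennreal (g x y) \<partial>\<sigma>) * indicator {T<..} y" by (rule arg_cong)
      also have "\<dots> = (\<integral>\<^sup>+x. h x y \<partial>\<sigma>)" unfolding h_def by (rule nn_integral_multc[OF gm, symmetric])
      finally show ?thesis .
    qed (simp add: h_def)
  qed
  also have "\<dots> = (\<integral>\<^sup>+x. (\<integral>\<^sup>+y. h x y \<partial>lborel) \<partial>\<sigma>)"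
    by (rule tonelli_swap[OF finite_measure.axioms(1)[OF s(1)] s(2) hm])
  finally have eq: "(\<integral>\<^sup>+y\<in>{T<..}. ennreal (- Im (phi_repr \<gamma> \<sigma> (\<i> * complex_of_real y)) / y\<^sup>2) \<partial>lborel)
      = (\<integral>\<^sup>+x. (\<integral>\<^sup>+y. h x y \<partial>lborel) \<partial>\<sigma>)" .
  have gsplit: "g x y = x\<^sup>2 / (y * (y\<^sup>2 + x\<^sup>2)) + 1 / (y * (y\<^sup>2 + x\<^sup>2))" if y: "y > 0" for x y
  proof -
    have p: "0 < y\<^sup>2 + x\<^sup>2" using y by (simp add: add_pos_nonneg)
    have e1: "x * (x * y) + y * (y * y) = y * (y\<^sup>2 + x\<^sup>2)"
      and e2: "x * (x * (y * y)) + y * (y * (y * y)) = (y * y) * (y\<^sup>2 + x\<^sup>2)"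
      and e3: "x * x + y * y = y\<^sup>2 + x\<^sup>2"
      by (simp_all add: power2_eq_square algebra_simps)
    have nz: "x * (x * y) + y * (y * y) \<noteq> 0" "x * (x * (y * y)) + y * (y * (y * y)) \<noteq> 0"
      "x * x + y * y \<noteq> 0"
      unfolding e1 e2 e3 using y p by simp_all
    show ?thesis unfolding g_def using y p nz by (simp add: field_simps power2_eq_square)
  qed
  define K where "K = (\<lambda>x::real. ennreal (ln (1 + x\<^sup>2 / T\<^sup>2) / 2))"
  have low: "K x \<le> (\<integral>\<^sup>+y. h x y \<partial>lborel)" for x
  proof -
    have "K x = (\<integral>\<^sup>+y\<in>{T<..}. ennreal (x\<^sup>2 / (y * (y\<^sup>2 + x\<^sup>2))) \<partial>lborel)"
      unfolding K_def using K_int[OF T, of x] by simp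
    also have "\<dots> \<le> (\<integral>\<^sup>+y. h x y \<partial>lborel)"
    proof (rule nn_integral_mono)
      fix y :: real
      show "ennreal (x\<^sup>2 / (y * (y\<^sup>2 + x\<^sup>2))) * indicator {T<..} y \<le> h x y"
      proof (cases "T < y")
        case True
        then have y: "y > 0" using T by simp
        have p: "0 < y * (y\<^sup>2 + x\<^sup>2)" using y by (simp add: add_pos_nonneg)
        have "x\<^sup>2 / (y * (y\<^sup>2 + x\<^sup>2)) \<le> g x y"
          unfolding gsplit[OF y] using p by simp
        then show ?thesis unfolding h_def using True by (simp add: ennreal_leI)
      qed (simp add: h_def)
    qed
    finally show ?thesis .
  qed
  have up: "(\<integral>\<^sup>+y. h x y \<partial>lborel) \<le> 1 * K x + ennreal (1 / (2 * T\<^sup>2))" for x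
  proof -
    have "(\<integral>\<^sup>+y. h x y \<partial>lborel) \<le> (\<integral>\<^sup>+y. ennreal (x\<^sup>2 / (y * (y\<^sup>2 + x\<^sup>2))) * indicator {T<..} y
                 + ennreal (1 / y ^ 3) * indicator {T<..} y \<partial>lborel)"
    proof (rule nn_integral_mono)
      fix y :: real
      show "h x y \<le> ennreal (x\<^sup>2 / (y * (y\<^sup>2 + x\<^sup>2))) * indicator {T<..} y + ennreal (1 / y ^ 3) * indicator {T<..} y"
      proof (cases "T < y")
        case True
        then have y: "y > 0" using T by simp
        have p: "0 < y\<^sup>2 + x\<^sup>2" using y by (simp add: add_pos_nonneg)
        note e = gsplit[OF y, of x]
        have "1 / (y * (y\<^sup>2 + x\<^sup>2)) \<le> 1 / y ^ 3"
          using y p by (intro divide_left_mono) (auto simp: power3_eq_cube power2_eq_square)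
        then have "g x y \<le> x\<^sup>2 / (y * (y\<^sup>2 + x\<^sup>2)) + 1 / y ^ 3" unfolding e by simp
        then have "ennreal (g x y) \<le> ennreal (x\<^sup>2 / (y * (y\<^sup>2 + x\<^sup>2))) + ennreal (1 / y ^ 3)"
          using y p by (simp add: ennreal_plus[symmetric] ennreal_leI del: ennreal_plus)
        then show ?thesis unfolding h_def using True by simp
      qed (simp add: h_def)
    qed
    also have "\<dots> = (\<integral>\<^sup>+y\<in>{T<..}. ennreal (x\<^sup>2 / (y * (y\<^sup>2 + x\<^sup>2))) \<partial>lborel)
                 + (\<integral>\<^sup>+y\<in>{T<..}. ennreal (1 / y ^ 3) \<partial>lborel)"
      by (rule nn_integral_add) measurable
    also have "\<dots> = 1 * K x + ennreal (1 / (2 * T\<^sup>2))"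
      unfolding K_int[OF T] cube_int[OF T] K_def by simp
    finally show ?thesis .
  qed
  have Km: "K \<in> borel_measurable \<sigma>" unfolding K_def measurable_cong_sets[OF s(2) refl] by measurable
  show ?thesis
  proof
    assume fin: "(\<integral>\<^sup>+y\<in>{T<..}. ennreal (- Im (phi_repr \<gamma> \<sigma> (\<i> * complex_of_real y)) / y\<^sup>2) \<partial>lborel) < \<infinity>"
    have "(\<integral>\<^sup>+x. K x \<partial>\<sigma>) \<le> (\<integral>\<^sup>+x. (\<integral>\<^sup>+y. h x y \<partial>lborel) \<partial>\<sigma>)"
      by (rule nn_integral_mono) (rule low)
    also have "\<dots> < \<infinity>" using fin eq by simp
    finally have "(\<integral>\<^sup>+x. K x \<partial>\<sigma>) < \<infinity>" .
    then show "(\<integral>\<^sup>+x. ennreal (ln (1 + x\<^sup>2)) \<partial>\<sigma>) < \<infinity>"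
      using log_fin_iff[OF s, of "T\<^sup>2"] T unfolding K_def by simp
  next
    assume fin: "(\<integral>\<^sup>+x. ennreal (ln (1 + x\<^sup>2)) \<partial>\<sigma>) < \<infinity>"
    then have Kf: "(\<integral>\<^sup>+x. K x \<partial>\<sigma>) < \<infinity>"
      using log_fin_iff[OF s, of "T\<^sup>2"] T unfolding K_def by simp
    have "(\<integral>\<^sup>+x. (\<integral>\<^sup>+y. h x y \<partial>lborel) \<partial>\<sigma>) < \<infinity>"
      by (rule fin_dom_enn[where f="\<lambda>x. \<integral>\<^sup>+y. h x y \<partial>lborel" and c=1 and d="ennreal (1 / (2 * T\<^sup>2))", OF s(1) Km _ _ _ Kf])
        (use up in simp_all)
    then show "(\<integral>\<^sup>+y\<in>{T<..}. ennreal (- Im (phi_repr \<gamma> \<sigma> (\<i> * complex_of_real y)) / y\<^sup>2) \<partial>lborel) < \<infinity>"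
      using eq by simp
  qed
qed

lemma g4split:
  fixes x y :: real assumes y: "y > 0"
  shows "(1 / y) * (1 + x\<^sup>2) / (x\<^sup>2 + (1 / y)\<^sup>2) = y * x\<^sup>2 / (1 + x\<^sup>2 * y\<^sup>2) + y / (1 + x\<^sup>2 * y\<^sup>2)"
proof -
  have p: "0 < 1 + x\<^sup>2 * y\<^sup>2" by (simp add: add_pos_nonneg)
  have a: "x\<^sup>2 + (1 / y)\<^sup>2 = (1 + x\<^sup>2 * y\<^sup>2) / y\<^sup>2"
    using y by (simp add: power_divide add_divide_distrib)
  have "(1 / y) * (1 + x\<^sup>2) / (x\<^sup>2 + (1 / y)\<^sup>2) = (1 / y) * (1 + x\<^sup>2) * y\<^sup>2 / (1 + x\<^sup>2 * y\<^sup>2)"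
    unfolding a by simp
  also have "(1 / y) * (1 + x\<^sup>2) * y\<^sup>2 = y * x\<^sup>2 + y"
    using y by (simp add: power2_eq_square algebra_simps)
  also have "(y * x\<^sup>2 + y) / (1 + x\<^sup>2 * y\<^sup>2) = y * x\<^sup>2 / (1 + x\<^sup>2 * y\<^sup>2) + y / (1 + x\<^sup>2 * y\<^sup>2)"
    by (rule add_divide_distrib)
  finally show ?thesis .
qed

lemma P4_iff:
  fixes \<sigma> :: "real measure" and \<gamma> T :: real
  assumes s: "finite_measure \<sigma>" "sets \<sigma> = sets borel" and T: "T > 0"
  shows "(\<integral>\<^sup>+y\<in>{0<..<1/T}. ennreal (Im (R_transform \<gamma> \<sigma> (\<i> * complex_of_real y))) \<partial>lborel) < \<infinity>
     \<longleftrightarrow> (\<integral>\<^sup>+x. ennreal (ln (1 + x\<^sup>2)) \<partial>\<sigma>) < \<infinity>"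
proof -
  interpret finite_measure \<sigma> by fact
  define g where "g = (\<lambda>x y::real. (1 / y) * (1 + x\<^sup>2) / (x\<^sup>2 + (1 / y)\<^sup>2))"
  define h where "h = (\<lambda>x y. ennreal (g x y) * indicator {0<..<1/T} y)"
  have pt: "ennreal (Im (R_transform \<gamma> \<sigma> (\<i> * complex_of_real y))) = (\<integral>\<^sup>+x. ennreal (g x y) \<partial>\<sigma>)"
    if y: "y > 0" for y
  proof -
    have y': "1 / y > 0" using y by simp
    have "Im (R_transform \<gamma> \<sigma> (\<i> * complex_of_real y)) = (\<integral>x. g x y \<partial>\<sigma>)"
      unfolding R_Im[OF y] phi_Im[OF s y'] g_def by simp
    also have "ennreal \<dots> = (\<integral>\<^sup>+x. ennreal (g x y) \<partial>\<sigma>)"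
    proof (rule nn_integral_eq_integral[symmetric])
      show "integrable \<sigma> (\<lambda>x. g x y)" unfolding g_def
        by (rule S_integrable[OF s y'])
      show "AE x in \<sigma>. 0 \<le> g x y" using y unfolding g_def by (simp add: add_nonneg_nonneg)
    qed
    finally show ?thesis .
  qed
  have hm: "(\<lambda>(x, y). h x y) \<in> borel_measurable (borel \<Otimes>\<^sub>M borel)"
    unfolding h_def g_def by measurable
  have "(\<integral>\<^sup>+y\<in>{0<..<1/T}. ennreal (Im (R_transform \<gamma> \<sigma> (\<i> * complex_of_real y))) \<partial>lborel)
      = (\<integral>\<^sup>+y. (\<integral>\<^sup>+x. h x y \<partial>\<sigma>) \<partial>lborel)"
  proof (rule nn_integral_cong)
    fix y :: real
    show "ennreal (Im (R_transform \<gamma> \<sigma> (\<i> * complex_of_real y))) * indicator {0<..<1/T} y = (\<integral>\<^sup>+x. h x y \<partial>\<sigma>)"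
    proof (cases "y \<in> {0<..<1/T}")
      case True
      then have y0: "y > 0" by simp
      have gm: "(\<lambda>x. ennreal (g x y)) \<in> borel_measurable \<sigma>"
        unfolding measurable_cong_sets[OF s(2) refl] g_def by measurable
      from pt[OF y0] have "ennreal (Im (R_transform \<gamma> \<sigma> (\<i> * complex_of_real y))) * indicator {0<..<1/T} y
          = (\<integral>\<^sup>+x. ennreal (g x y) \<partial>\<sigma>) * indicator {0<..<1/T} y" by (rule arg_cong)
      also have "\<dots> = (\<integral>\<^sup>+x. h x y \<partial>\<sigma>)" unfolding h_def by (rule nn_integral_multc[OF gm, symmetric])
      finally show ?thesis .
    next
      case False
      then show ?thesis unfolding h_def by simp
    qed
  qed
  also have "\<dots> = (\<integral>\<^sup>+x. (\<integral>\<^sup>+y. h x y \<partial>lborel) \<partial>\<sigma>)"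
    by (rule tonelli_swap[OF finite_measure.axioms(1)[OF s(1)] s(2) hm])
  finally have eq: "(\<integral>\<^sup>+y\<in>{0<..<1/T}. ennreal (Im (R_transform \<gamma> \<sigma> (\<i> * complex_of_real y))) \<partial>lborel)
      = (\<integral>\<^sup>+x. (\<integral>\<^sup>+y. h x y \<partial>lborel) \<partial>\<sigma>)" .
  define K where "K = (\<lambda>x::real. ennreal (ln (1 + x\<^sup>2 / T\<^sup>2) / 2))"
  have low: "K x \<le> (\<integral>\<^sup>+y. h x y \<partial>lborel)" for x
  proof -
    have "K x = (\<integral>\<^sup>+y\<in>{0<..<1/T}. ennreal (y * x\<^sup>2 / (1 + x\<^sup>2 * y\<^sup>2)) \<partial>lborel)"
      unfolding K_def using K_int0[OF T, of x] by simp
    also have "\<dots> \<le> (\<integral>\<^sup>+y. h x y \<partial>lborel)"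
    proof (rule nn_integral_mono)
      fix y :: real
      show "ennreal (y * x\<^sup>2 / (1 + x\<^sup>2 * y\<^sup>2)) * indicator {0<..<1/T} y \<le> h x y"
      proof (cases "y \<in> {0<..<1/T}")
        case True
        then have y: "y > 0" by simp
        have p: "0 < 1 + x\<^sup>2 * y\<^sup>2" by (simp add: add_pos_nonneg)
        have "y * x\<^sup>2 / (1 + x\<^sup>2 * y\<^sup>2) \<le> g x y"
          unfolding g_def g4split[OF y] using p y by simp
        then show ?thesis unfolding h_def using True by (simp add: ennreal_leI)
      qed (simp add: h_def)
    qed
    finally show ?thesis .
  qed
  have up: "(\<integral>\<^sup>+y. h x y \<partial>lborel) \<le> 1 * K x + ennreal (1 / T) * ennreal (1 / T)" for x
  proof -
    have "(\<integral>\<^sup>+y. h x y \<partial>lborel) \<le> (\<integral>\<^sup>+y. ennreal (y * x\<^sup>2 / (1 + x\<^sup>2 * y\<^sup>2)) * indicator {0<..<1/T} y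
                 + ennreal (1 / T) * indicator {0<..<1/T} y \<partial>lborel)"
    proof (rule nn_integral_mono)
      fix y :: real
      show "h x y \<le> ennreal (y * x\<^sup>2 / (1 + x\<^sup>2 * y\<^sup>2)) * indicator {0<..<1/T} y + ennreal (1 / T) * indicator {0<..<1/T} y"
      proof (cases "y \<in> {0<..<1/T}")
        case True
        then have y: "y > 0" and yT: "y < 1 / T" by simp_all
        have p: "1 \<le> 1 + x\<^sup>2 * y\<^sup>2" by simp
        have "y / (1 + x\<^sup>2 * y\<^sup>2) \<le> y" using y p by (simp add: divide_le_eq mult_le_cancel_left1 add_pos_nonneg)
        then have "y / (1 + x\<^sup>2 * y\<^sup>2) \<le> 1 / T" using yT by linarith
        then have "g x y \<le> y * x\<^sup>2 / (1 + x\<^sup>2 * y\<^sup>2) + 1 / T" unfolding g_def g4split[OF y] by simp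
        then have "ennreal (g x y) \<le> ennreal (y * x\<^sup>2 / (1 + x\<^sup>2 * y\<^sup>2)) + ennreal (1 / T)"
          using y T by (simp add: ennreal_plus[symmetric] ennreal_leI add_pos_nonneg del: ennreal_plus)
        then show ?thesis unfolding h_def using True by simp
      qed (simp add: h_def)
    qed
    also have "\<dots> = (\<integral>\<^sup>+y\<in>{0<..<1/T}. ennreal (y * x\<^sup>2 / (1 + x\<^sup>2 * y\<^sup>2)) \<partial>lborel)
                 + (\<integral>\<^sup>+y. ennreal (1 / T) * indicator {0<..<1/T} y \<partial>lborel)"
      by (rule nn_integral_add) measurable
    also have "\<dots> = 1 * K x + ennreal (1 / T) * ennreal (1 / T)"
      unfolding K_int0[OF T] K_def using T by (simp add: nn_integral_cmult_indicator)
    finally show ?thesis .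
  qed
  have Km: "K \<in> borel_measurable \<sigma>" unfolding K_def measurable_cong_sets[OF s(2) refl] by measurable
  show ?thesis
  proof
    assume fin: "(\<integral>\<^sup>+y\<in>{0<..<1/T}. ennreal (Im (R_transform \<gamma> \<sigma> (\<i> * complex_of_real y))) \<partial>lborel) < \<infinity>"
    have "(\<integral>\<^sup>+x. K x \<partial>\<sigma>) \<le> (\<integral>\<^sup>+x. (\<integral>\<^sup>+y. h x y \<partial>lborel) \<partial>\<sigma>)"
      by (rule nn_integral_mono) (rule low)
    also have "\<dots> < \<infinity>" using fin eq by simp
    finally have "(\<integral>\<^sup>+x. K x \<partial>\<sigma>) < \<infinity>" .
    then show "(\<integral>\<^sup>+x. ennreal (ln (1 + x\<^sup>2)) \<partial>\<sigma>) < \<infinity>"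
      using log_fin_iff[OF s, of "T\<^sup>2"] T unfolding K_def by simp
  next
    assume fin: "(\<integral>\<^sup>+x. ennreal (ln (1 + x\<^sup>2)) \<partial>\<sigma>) < \<infinity>"
    then have Kf: "(\<integral>\<^sup>+x. K x \<partial>\<sigma>) < \<infinity>"
      using log_fin_iff[OF s, of "T\<^sup>2"] T unfolding K_def by simp
    have "(\<integral>\<^sup>+x. (\<integral>\<^sup>+y. h x y \<partial>lborel) \<partial>\<sigma>) < \<infinity>"
      by (rule fin_dom_enn[where f="\<lambda>x. \<integral>\<^sup>+y. h x y \<partial>lborel" and c=1 and d="ennreal (1 / T) * ennreal (1 / T)", OF s(1) Km _ _ _ Kf])
        (use up in \<open>simp_all add: ennreal_mult_less_top\<close>)
    then show "(\<integral>\<^sup>+y\<in>{0<..<1/T}. ennreal (Im (R_transform \<gamma> \<sigma> (\<i> * complex_of_real y))) \<partial>lborel) < \<infinity>"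
      using eq by simp
  qed
qed

lemma var_nn:
  fixes f :: "real \<Rightarrow> real" and \<mu> :: "real measure"
  assumes P: "prob_space \<mu>" and fm: "f \<in> borel_measurable \<mu>" and B: "\<And>x. \<bar>f x\<bar> \<le> B"
  shows "(\<integral>\<^sup>+t. (\<integral>\<^sup>+s. ennreal ((f t - f s)\<^sup>2) \<partial>\<mu>) \<partial>\<mu>)
           = ennreal (2 * ((\<integral>x. (f x)\<^sup>2 \<partial>\<mu>) - (\<integral>x. f x \<partial>\<mu>)\<^sup>2))"
    and "(\<integral>x. (f x)\<^sup>2 \<partial>\<mu>) - (\<integral>x. f x \<partial>\<mu>)\<^sup>2 \<ge> 0"
proof -
  interpret prob_space \<mu> by fact
  define E where "E = (\<integral>x. f x \<partial>\<mu>)"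
  define E2 where "E2 = (\<integral>x. (f x)\<^sup>2 \<partial>\<mu>)"
  have i1: "integrable \<mu> f"
    by (rule integrable_const_bound[where B=B]) (use B fm in auto)
  have i2: "integrable \<mu> (\<lambda>x. (f x)\<^sup>2)"
  proof (rule integrable_const_bound[where B="B\<^sup>2"])
    show "AE x in \<mu>. norm ((f x)\<^sup>2) \<le> B\<^sup>2"
    proof (rule AE_I2)
      fix x
      have "\<bar>f x\<bar>\<^sup>2 \<le> B\<^sup>2" using B[of x] by (intro power_mono) auto
      then show "norm ((f x)\<^sup>2) \<le> B\<^sup>2" by simp
    qed
  qed (use fm in simp)
  have inner: "(\<integral>s. (f t - f s)\<^sup>2 \<partial>\<mu>) = (f t)\<^sup>2 - 2 * f t * E + E2" for t
  proof -
    have "(\<lambda>s. (f t - f s)\<^sup>2) = (\<lambda>s. ((f t)\<^sup>2 - 2 * f t * f s) + (f s)\<^sup>2)"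
      by (auto simp: fun_eq_iff power2_diff)
    then have "(\<integral>s. (f t - f s)\<^sup>2 \<partial>\<mu>) = (\<integral>s. ((f t)\<^sup>2 - 2 * f t * f s) + (f s)\<^sup>2 \<partial>\<mu>)" by simp
    also have "\<dots> = (\<integral>s. (f t)\<^sup>2 - 2 * f t * f s \<partial>\<mu>) + E2"
      unfolding E2_def using i1 i2 by (intro Bochner_Integration.integral_add) auto
    also have "(\<integral>s. (f t)\<^sup>2 - 2 * f t * f s \<partial>\<mu>) = (f t)\<^sup>2 - 2 * f t * E"
      unfolding E_def using i1 by (subst Bochner_Integration.integral_diff) (auto simp: prob_space)
    finally show ?thesis .
  qed
  have iin: "integrable \<mu> (\<lambda>s. (f t - f s)\<^sup>2)" for t
    using i1 i2 by (auto simp: power2_diff intro!: Bochner_Integration.integrable_add Bochner_Integration.integrable_diff)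
  have nn_inner: "(\<integral>\<^sup>+s. ennreal ((f t - f s)\<^sup>2) \<partial>\<mu>) = ennreal ((f t)\<^sup>2 - 2 * f t * E + E2)" for t
    unfolding inner[symmetric] by (rule nn_integral_eq_integral[OF iin]) simp
  have inn0: "0 \<le> (f t)\<^sup>2 - 2 * f t * E + E2" for t
    unfolding inner[symmetric] by (rule integral_nonneg_AE) simp
  have iout: "integrable \<mu> (\<lambda>t. (f t)\<^sup>2 - 2 * f t * E + E2)"
    using i1 i2 by (auto intro!: Bochner_Integration.integrable_add Bochner_Integration.integrable_diff)
  have out: "(\<integral>t. (f t)\<^sup>2 - 2 * f t * E + E2 \<partial>\<mu>) = 2 * (E2 - E\<^sup>2)"
  proof -
    have "(\<integral>t. (f t)\<^sup>2 - 2 * f t * E + E2 \<partial>\<mu>) = (\<integral>t. (f t)\<^sup>2 - 2 * f t * E \<partial>\<mu>) + E2"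
      using i1 i2 by (subst Bochner_Integration.integral_add) (auto simp: prob_space)
    also have "(\<integral>t. (f t)\<^sup>2 - 2 * f t * E \<partial>\<mu>) = E2 - 2 * E * E"
      unfolding E2_def using i1 i2 by (subst Bochner_Integration.integral_diff) (auto simp: E_def)
    finally show ?thesis by (simp add: power2_eq_square)
  qed
  show "(\<integral>\<^sup>+t. (\<integral>\<^sup>+s. ennreal ((f t - f s)\<^sup>2) \<partial>\<mu>) \<partial>\<mu>)
           = ennreal (2 * ((\<integral>x. (f x)\<^sup>2 \<partial>\<mu>) - (\<integral>x. f x \<partial>\<mu>)\<^sup>2))"
    unfolding nn_inner E_def[symmetric] E2_def[symmetric] out[symmetric]
    by (rule nn_integral_eq_integral[OF iout]) (simp add: inn0)
  have "0 \<le> (\<integral>t. (f t)\<^sup>2 - 2 * f t * E + E2 \<partial>\<mu>)" by (rule integral_nonneg_AE) (simp add: inn0)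
  then have "0 \<le> 2 * (E2 - E\<^sup>2)" by (simp only: out)
  then show "(\<integral>x. (f x)\<^sup>2 \<partial>\<mu>) - (\<integral>x. f x \<partial>\<mu>)\<^sup>2 \<ge> 0"
    unfolding E_def E2_def by simp
qed

definition aa :: "complex \<Rightarrow> real \<Rightarrow> complex" where
  "aa w t = 1 / (w - complex_of_real t)"

definition Wn :: "real measure \<Rightarrow> complex \<Rightarrow> ennreal" where
  "Wn \<mu> w = (\<integral>\<^sup>+t. (\<integral>\<^sup>+s. ennreal ((cmod (aa w t - aa w s))\<^sup>2) \<partial>\<mu>) \<partial>\<mu>)"

definition Aint :: "real measure \<Rightarrow> complex \<Rightarrow> real" where
  "Aint \<mu> w = (\<integral>t. (cmod (aa w t))\<^sup>2 \<partial>\<mu>)"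

lemma aa_meas[measurable]: "aa w \<in> borel_measurable borel"
  unfolding aa_def[abs_def] by measurable

lemma aa_bound: assumes "Im w > 0" shows "cmod (aa w t) \<le> 1 / Im w"
proof -
  have "Im w \<le> cmod (w - complex_of_real t)"
    using abs_Im_le_cmod[of "w - complex_of_real t"] assms by simp
  moreover have "0 < cmod (w - complex_of_real t) * Im w"
    using calculation assms by (intro mult_pos_pos) linarith+
  ultimately have "1 / cmod (w - complex_of_real t) \<le> 1 / Im w"
    by (intro divide_left_mono) auto
  then show ?thesis unfolding aa_def by (simp add: norm_divide)
qed

lemma aa_Im: "Im (aa w t) = - Im w * (cmod (aa w t))\<^sup>2"
  unfolding aa_def by (simp add: Im_divide' norm_divide power_one_over)

lemma cauchy_aa: "cauchy_transform \<mu> w = integral\<^sup>L \<mu> (aa w)"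
  unfolding cauchy_transform_def aa_def ..

lemma L1:
  fixes \<mu> :: "real measure" and w :: complex
  assumes P: "prob_space \<mu>" and s: "sets \<mu> = sets borel" and v: "Im w > 0"
  shows "Wn \<mu> w = ennreal (2 * (Aint \<mu> w - (cmod (cauchy_transform \<mu> w))\<^sup>2))"
    and "Aint \<mu> w - (cmod (cauchy_transform \<mu> w))\<^sup>2 \<ge> 0"
    and "Im (cauchy_transform \<mu> w) = - Im w * Aint \<mu> w"
proof -
  interpret prob_space \<mu> by fact
  define p where "p = (\<lambda>t. Re (aa w t))"
  define q where "q = (\<lambda>t. Im (aa w t))"
  have pm: "p \<in> borel_measurable \<mu>" and qm: "q \<in> borel_measurable \<mu>"
    unfolding p_def q_def measurable_cong_sets[OF s refl] by measurable
  have pb: "\<bar>p t\<bar> \<le> 1 / Im w" for t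
    unfolding p_def using aa_bound[OF v, of t] abs_Re_le_cmod[of "aa w t"] by linarith
  have qb: "\<bar>q t\<bar> \<le> 1 / Im w" for t
    unfolding q_def using aa_bound[OF v, of t] abs_Im_le_cmod[of "aa w t"] by linarith
  have pb2: "norm ((p t)\<^sup>2) \<le> (1 / Im w)\<^sup>2" for t
  proof -
    have "\<bar>p t\<bar>\<^sup>2 \<le> (1 / Im w)\<^sup>2" by (rule power_mono[OF pb]) simp
    then show ?thesis by simp
  qed
  have qb2: "norm ((q t)\<^sup>2) \<le> (1 / Im w)\<^sup>2" for t
  proof -
    have "\<bar>q t\<bar>\<^sup>2 \<le> (1 / Im w)\<^sup>2" by (rule power_mono[OF qb]) simp
    then show ?thesis by simp
  qed
  have am: "aa w \<in> borel_measurable \<mu>" unfolding measurable_cong_sets[OF s refl] by measurable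
  have ai: "integrable \<mu> (aa w)"
    by (rule integrable_const_bound[where B="1 / Im w"]) (simp add: aa_bound[OF v], rule am)
  have ip2: "integrable \<mu> (\<lambda>t. (p t)\<^sup>2)"
    by (rule integrable_const_bound[where B="(1 / Im w)\<^sup>2"]) (simp only: pb2 AE_I2, use pm in measurable)
  have iq2: "integrable \<mu> (\<lambda>t. (q t)\<^sup>2)"
    by (rule integrable_const_bound[where B="(1 / Im w)\<^sup>2"]) (simp only: qb2 AE_I2, use qm in measurable)
  have cm: "(cmod (aa w t - aa w s))\<^sup>2 = (p t - p s)\<^sup>2 + (q t - q s)\<^sup>2" for t s
    unfolding p_def q_def by (simp add: cmod_power2)
  have ca: "(cmod (aa w t))\<^sup>2 = (p t)\<^sup>2 + (q t)\<^sup>2" for t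
    unfolding p_def q_def by (simp add: cmod_power2)
  have ReG: "Re (cauchy_transform \<mu> w) = (\<integral>t. p t \<partial>\<mu>)"
    unfolding cauchy_aa p_def using integral_Re[OF ai] by simp
  have ImG: "Im (cauchy_transform \<mu> w) = (\<integral>t. q t \<partial>\<mu>)"
    unfolding cauchy_aa q_def using integral_Im[OF ai] by simp
  have Aeq: "Aint \<mu> w = (\<integral>t. (p t)\<^sup>2 \<partial>\<mu>) + (\<integral>t. (q t)\<^sup>2 \<partial>\<mu>)"
    unfolding Aint_def ca using ip2 iq2 by (rule Bochner_Integration.integral_add)
  have G2: "(cmod (cauchy_transform \<mu> w))\<^sup>2 = (\<integral>t. p t \<partial>\<mu>)\<^sup>2 + (\<integral>t. q t \<partial>\<mu>)\<^sup>2"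
    by (simp add: cmod_power2 ReG ImG)
  note vp = var_nn[OF P pm pb] and vq = var_nn[OF P qm qb]
  have "Wn \<mu> w = (\<integral>\<^sup>+t. (\<integral>\<^sup>+s. ennreal ((p t - p s)\<^sup>2) + ennreal ((q t - q s)\<^sup>2) \<partial>\<mu>) \<partial>\<mu>)"
    unfolding Wn_def cm by (simp add: ennreal_plus)
  also have "\<dots> = (\<integral>\<^sup>+t. (\<integral>\<^sup>+s. ennreal ((p t - p s)\<^sup>2) \<partial>\<mu>) + (\<integral>\<^sup>+s. ennreal ((q t - q s)\<^sup>2) \<partial>\<mu>) \<partial>\<mu>)"
    by (rule nn_integral_cong, rule nn_integral_add) (use pm qm in auto)
  also have "\<dots> = (\<integral>\<^sup>+t. (\<integral>\<^sup>+s. ennreal ((p t - p s)\<^sup>2) \<partial>\<mu>) \<partial>\<mu>) + (\<integral>\<^sup>+t. (\<integral>\<^sup>+s. ennreal ((q t - q s)\<^sup>2) \<partial>\<mu>) \<partial>\<mu>)"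
    by (rule nn_integral_add) (use pm qm in auto)
  also have "\<dots> = ennreal (2 * (Aint \<mu> w - (cmod (cauchy_transform \<mu> w))\<^sup>2))"
    unfolding vp(1) vq(1) Aeq G2 using vp(2) vq(2) by (simp add: ennreal_plus[symmetric] del: ennreal_plus)
  finally show "Wn \<mu> w = ennreal (2 * (Aint \<mu> w - (cmod (cauchy_transform \<mu> w))\<^sup>2))" .
  show "Aint \<mu> w - (cmod (cauchy_transform \<mu> w))\<^sup>2 \<ge> 0"
    unfolding Aeq G2 using vp(2) vq(2) by simp
  have "(\<integral>t. q t \<partial>\<mu>) = (\<integral>t. - Im w * (cmod (aa w t))\<^sup>2 \<partial>\<mu>)"
    unfolding q_def aa_Im ..
  also have "\<dots> = - Im w * Aint \<mu> w" unfolding Aint_def by simp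
  finally show "Im (cauchy_transform \<mu> w) = - Im w * Aint \<mu> w" unfolding ImG .
qed

lemma cmod_w_t: "(cmod (w - complex_of_real t))\<^sup>2 = (Re w - t)\<^sup>2 + (Im w)\<^sup>2"
  by (simp add: cmod_power2)

lemma aa_diff:
  assumes v: "Im w > 0"
  shows "(cmod (aa w t - aa w s))\<^sup>2 = (t - s)\<^sup>2 / ((cmod (w - complex_of_real t))\<^sup>2 * (cmod (w - complex_of_real s))\<^sup>2)"
proof -
  have nt: "w - complex_of_real t \<noteq> 0" and ns: "w - complex_of_real s \<noteq> 0"
    using v by (auto simp: complex_eq_iff)
  have "aa w t - aa w s = complex_of_real (t - s) / ((w - complex_of_real t) * (w - complex_of_real s))"
    unfolding aa_def using nt ns by (simp add: field_simps)
  then have "cmod (aa w t - aa w s) = \<bar>t - s\<bar> / (cmod (w - complex_of_real t) * cmod (w - complex_of_real s))"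
    by (simp add: norm_divide norm_mult del: of_real_diff)
  then show ?thesis by (simp add: power_divide power_mult_distrib)
qed

lemma F_Im:
  assumes "cauchy_transform \<mu> w \<noteq> 0"
  shows "Im (F_transform \<mu> w) = - Im (cauchy_transform \<mu> w) / (cmod (cauchy_transform \<mu> w))\<^sup>2"
  unfolding F_transform_def by (simp add: Im_divide')

lemma Wn_meas_inner:
  fixes \<mu> :: "real measure"
  assumes P: "prob_space \<mu>" and s: "sets \<mu> = sets borel"
    and f: "(\<lambda>(t, s). f t s) \<in> borel_measurable (borel \<Otimes>\<^sub>M borel)"
  shows "(\<lambda>t. \<integral>\<^sup>+s. f t s \<partial>\<mu>) \<in> borel_measurable borel"
proof -
  interpret prob_space \<mu> by fact
  have ss: "sets (borel \<Otimes>\<^sub>M \<mu>) = sets (borel \<Otimes>\<^sub>M borel)"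
    using s by (intro sets_pair_measure_cong) simp_all
  have "(\<lambda>(t, s). f t s) \<in> borel_measurable (borel \<Otimes>\<^sub>M \<mu>)"
    unfolding measurable_cong_sets[OF ss refl] by (rule f)
  then show ?thesis by (rule borel_measurable_nn_integral) 
qed

lemma Wn_cmp:
  fixes \<mu> :: "real measure" and w w' :: complex and C :: real
  assumes P: "prob_space \<mu>" and s: "sets \<mu> = sets borel" and v: "Im w > 0" and v': "Im w' > 0"
    and C: "C > 0"
    and le: "\<And>t. (cmod (w' - complex_of_real t))\<^sup>2 \<le> C * (cmod (w - complex_of_real t))\<^sup>2"
  shows "Wn \<mu> w \<le> ennreal (C\<^sup>2) * Wn \<mu> w'"
proof -
  interpret prob_space \<mu> by fact
  define d where "d = (\<lambda>w t. (cmod (w - complex_of_real t))\<^sup>2)"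
  have dpos: "d w t > 0" "d w' t > 0" for t
    unfolding d_def using v v' by (auto simp: complex_eq_iff)
  have pt: "(cmod (aa w t - aa w s))\<^sup>2 \<le> C\<^sup>2 * (cmod (aa w' t - aa w' s))\<^sup>2" for t s
  proof -
    have "d w' t * d w' s \<le> (C * d w t) * (C * d w s)"
      using le[of t] le[of s] dpos[of t] dpos[of s] C unfolding d_def
      by (intro mult_mono) (auto intro!: mult_nonneg_nonneg)
    then have DD: "d w' t * d w' s \<le> C\<^sup>2 * (d w t * d w s)" by (simp add: power2_eq_square mult_ac)
    have p1: "0 < d w t * d w s" and p2: "0 < d w' t * d w' s" using dpos[of t] dpos[of s] by simp_all
    have "(t - s)\<^sup>2 / (d w t * d w s) = (t - s)\<^sup>2 * C\<^sup>2 / (C\<^sup>2 * (d w t * d w s))"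
      using C by simp
    also have "\<dots> \<le> (t - s)\<^sup>2 * C\<^sup>2 / (d w' t * d w' s)"
      using DD p1 p2 C by (intro divide_left_mono) auto
    finally have "(t - s)\<^sup>2 / (d w t * d w s) \<le> (t - s)\<^sup>2 * C\<^sup>2 / (d w' t * d w' s)" .
    then show ?thesis unfolding aa_diff[OF v] aa_diff[OF v'] d_def by (simp add: field_simps)
  qed
  have m: "(\<lambda>t. \<integral>\<^sup>+s. ennreal ((cmod (aa w' t - aa w' s))\<^sup>2) \<partial>\<mu>) \<in> borel_measurable \<mu>"
    unfolding measurable_cong_sets[OF s refl] by (rule Wn_meas_inner[OF P s]) measurable
  have m2: "(\<lambda>s. ennreal ((cmod (aa w' t - aa w' s))\<^sup>2)) \<in> borel_measurable \<mu>" for t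
    unfolding measurable_cong_sets[OF s refl] by measurable
  have "Wn \<mu> w \<le> (\<integral>\<^sup>+t. (\<integral>\<^sup>+s. ennreal (C\<^sup>2) * ennreal ((cmod (aa w' t - aa w' s))\<^sup>2) \<partial>\<mu>) \<partial>\<mu>)"
    unfolding Wn_def
    by (intro nn_integral_mono) (simp add: ennreal_mult[symmetric] ennreal_leI pt del: ennreal_mult)
  also have "\<dots> = (\<integral>\<^sup>+t. ennreal (C\<^sup>2) * (\<integral>\<^sup>+s. ennreal ((cmod (aa w' t - aa w' s))\<^sup>2) \<partial>\<mu>) \<partial>\<mu>)"
    by (intro nn_integral_cong nn_integral_cmult m2)
  also have "\<dots> = ennreal (C\<^sup>2) * Wn \<mu> w'"
    unfolding Wn_def by (rule nn_integral_cmult[OF m])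
  finally show ?thesis .
qed

definition kk :: "real \<Rightarrow> real \<Rightarrow> real" where
  "kk y t = t\<^sup>2 / (y * (y\<^sup>2 + t\<^sup>2))"

definition jf :: "real \<Rightarrow> real \<Rightarrow> real \<Rightarrow> real" where
  "jf y t s = y * (t - s)\<^sup>2 / ((t\<^sup>2 + y\<^sup>2) * (s\<^sup>2 + y\<^sup>2))"

definition Jn :: "real measure \<Rightarrow> real \<Rightarrow> ennreal" where
  "Jn \<mu> y = ennreal y * Wn \<mu> (\<i> * complex_of_real y)"

lemma Jn_expand:
  fixes \<mu> :: "real measure"
  assumes P: "prob_space \<mu>" and s: "sets \<mu> = sets borel" and y: "y > 0"
  shows "Jn \<mu> y = (\<integral>\<^sup>+t. (\<integral>\<^sup>+s. ennreal (jf y t s) \<partial>\<mu>) \<partial>\<mu>)"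
proof -
  have v: "Im (\<i> * complex_of_real y) > 0" using y by simp
  have pt: "(cmod (aa (\<i> * complex_of_real y) t - aa (\<i> * complex_of_real y) s))\<^sup>2
      = (t - s)\<^sup>2 / ((t\<^sup>2 + y\<^sup>2) * (s\<^sup>2 + y\<^sup>2))" for t s
    unfolding aa_diff[OF v] cmod_w_t by simp
  have m1: "(\<lambda>s. ennreal ((t - s)\<^sup>2 / ((t\<^sup>2 + y\<^sup>2) * (s\<^sup>2 + y\<^sup>2)))) \<in> borel_measurable \<mu>" for t
    unfolding measurable_cong_sets[OF s refl] by measurable
  have m2: "(\<lambda>t. \<integral>\<^sup>+s. ennreal ((t - s)\<^sup>2 / ((t\<^sup>2 + y\<^sup>2) * (s\<^sup>2 + y\<^sup>2))) \<partial>\<mu>) \<in> borel_measurable \<mu>"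
    unfolding measurable_cong_sets[OF s refl] by (rule Wn_meas_inner[OF P s]) measurable
  have "Jn \<mu> y = ennreal y * (\<integral>\<^sup>+t. (\<integral>\<^sup>+s. ennreal ((t - s)\<^sup>2 / ((t\<^sup>2 + y\<^sup>2) * (s\<^sup>2 + y\<^sup>2))) \<partial>\<mu>) \<partial>\<mu>)"
    unfolding Jn_def Wn_def pt ..
  also have "\<dots> = (\<integral>\<^sup>+t. ennreal y * (\<integral>\<^sup>+s. ennreal ((t - s)\<^sup>2 / ((t\<^sup>2 + y\<^sup>2) * (s\<^sup>2 + y\<^sup>2))) \<partial>\<mu>) \<partial>\<mu>)"
    by (rule nn_integral_cmult[OF m2, symmetric])
  also have "\<dots> = (\<integral>\<^sup>+t. (\<integral>\<^sup>+s. ennreal y * ennreal ((t - s)\<^sup>2 / ((t\<^sup>2 + y\<^sup>2) * (s\<^sup>2 + y\<^sup>2))) \<partial>\<mu>) \<partial>\<mu>)"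
    by (intro nn_integral_cong nn_integral_cmult[OF m1, symmetric])
  also have "\<dots> = (\<integral>\<^sup>+t. (\<integral>\<^sup>+s. ennreal (jf y t s) \<partial>\<mu>) \<partial>\<mu>)"
    unfolding jf_def using y by (simp add: ennreal_mult[symmetric] del: ennreal_mult)
  finally show ?thesis .
qed

lemma jf_upper:
  fixes y t s :: real assumes y: "y > 0"
  shows "jf y t s \<le> 2 * kk y t + 2 * kk y s"
proof -
  define a where "a = t\<^sup>2 + y\<^sup>2"
  define b where "b = s\<^sup>2 + y\<^sup>2"
  have a: "a > 0" and b: "b > 0" unfolding a_def b_def using y by (simp_all add: add_nonneg_pos)
  have "y * y \<le> a" "y * y \<le> b" unfolding a_def b_def by (simp_all add: power2_eq_square)
  then have ya: "y / a \<le> 1 / y" and yb: "y / b \<le> 1 / y"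
    using y a b by (simp_all add: field_simps)
  have ts: "(t - s)\<^sup>2 \<le> 2 * t\<^sup>2 + 2 * s\<^sup>2"
  proof -
    have "0 \<le> (t + s)\<^sup>2" by simp
    then show ?thesis by (simp add: power2_diff power2_sum)
  qed
  have "jf y t s = (t - s)\<^sup>2 * y / (a * b)" unfolding jf_def a_def b_def by simp
  also have "\<dots> \<le> (2 * t\<^sup>2 + 2 * s\<^sup>2) * y / (a * b)"
    using ts y a b by (intro divide_right_mono mult_right_mono) auto
  also have "\<dots> = 2 * (t\<^sup>2 / a) * (y / b) + 2 * (s\<^sup>2 / b) * (y / a)"
    using a b by (simp add: field_simps)
  also have "\<dots> \<le> 2 * (t\<^sup>2 / a) * (1 / y) + 2 * (s\<^sup>2 / b) * (1 / y)"
    using ya yb a b by (intro add_mono mult_left_mono) auto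
  also have "\<dots> = 2 * kk y t + 2 * kk y s"
    unfolding kk_def a_def b_def by (simp add: field_simps add.commute)
  finally show ?thesis .
qed

lemma kk_le: assumes "y > 0" shows "kk y t \<le> 1 / y"
proof -
  have p: "0 < y\<^sup>2 + t\<^sup>2" using assms by (simp add: add_pos_nonneg)
  have "t\<^sup>2 / (y\<^sup>2 + t\<^sup>2) \<le> 1" using p by (simp add: divide_le_eq_1)
  then have "t\<^sup>2 / (y\<^sup>2 + t\<^sup>2) / y \<le> 1 / y" using assms by (intro divide_right_mono) auto
  then show ?thesis unfolding kk_def by (simp add: mult.commute)
qed

lemma kk_nonneg: assumes "y > 0" shows "kk y t \<ge> 0"
  unfolding kk_def using assms by (simp add: add_pos_nonneg)

lemma Jn_upper:
  fixes \<mu> :: "real measure"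
  assumes P: "prob_space \<mu>" and s: "sets \<mu> = sets borel" and y: "y > 0"
  shows "Jn \<mu> y \<le> 4 * (\<integral>\<^sup>+t. ennreal (kk y t) \<partial>\<mu>)"
proof -
  interpret prob_space \<mu> by fact
  define H where "H = (\<integral>\<^sup>+t. ennreal (kk y t) \<partial>\<mu>)"
  have km: "(\<lambda>t. ennreal (kk y t)) \<in> borel_measurable \<mu>"
    unfolding measurable_cong_sets[OF s refl] kk_def by measurable
  have km2: "(\<lambda>t. 2 * ennreal (kk y t)) \<in> borel_measurable \<mu>" using km by measurable
  have inner: "(\<integral>\<^sup>+s. 2 * ennreal (kk y t) + 2 * ennreal (kk y s) \<partial>\<mu>) = 2 * ennreal (kk y t) + 2 * H" for t
    unfolding H_def by (subst nn_integral_add) (auto simp: km km2 nn_integral_cmult emeasure_space_1)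
  have "Jn \<mu> y \<le> (\<integral>\<^sup>+t. (\<integral>\<^sup>+s. 2 * ennreal (kk y t) + 2 * ennreal (kk y s) \<partial>\<mu>) \<partial>\<mu>)"
    unfolding Jn_expand[OF P s y]
  proof (intro nn_integral_mono)
    fix t s :: real
    have "ennreal (jf y t s) \<le> ennreal (2 * kk y t + 2 * kk y s)"
      by (rule ennreal_leI[OF jf_upper[OF y]])
    also have "\<dots> = 2 * ennreal (kk y t) + 2 * ennreal (kk y s)"
      using kk_nonneg[OF y] by (simp add: ennreal_plus ennreal_mult)
    finally show "ennreal (jf y t s) \<le> 2 * ennreal (kk y t) + 2 * ennreal (kk y s)" .
  qed
  also have "\<dots> = (\<integral>\<^sup>+t. 2 * ennreal (kk y t) + 2 * H \<partial>\<mu>)"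
    unfolding inner ..
  also have "\<dots> = 2 * H + 2 * H"
    unfolding H_def by (subst nn_integral_add) (auto simp: km km2 nn_integral_cmult emeasure_space_1)
  also have "\<dots> = 4 * H" by (simp add: distrib_right[symmetric])
  finally show ?thesis unfolding H_def .
qed

lemma Jn_bound:
  fixes \<mu> :: "real measure"
  assumes P: "prob_space \<mu>" and s: "sets \<mu> = sets borel" and y: "y > 0"
  shows "Jn \<mu> y \<le> ennreal (4 / y)"
proof -
  interpret prob_space \<mu> by fact
  have "(\<integral>\<^sup>+t. ennreal (kk y t) \<partial>\<mu>) \<le> (\<integral>\<^sup>+t. ennreal (1 / y) \<partial>\<mu>)"
    by (intro nn_integral_mono ennreal_leI kk_le[OF y])
  also have "\<dots> = ennreal (1 / y)" by (simp add: emeasure_space_1)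
  finally have "4 * (\<integral>\<^sup>+t. ennreal (kk y t) \<partial>\<mu>) \<le> 4 * ennreal (1 / y)" by (rule mult_left_mono) simp
  also have "\<dots> = ennreal (4 / y)"
  proof -
    have "ennreal (4 / y) = ennreal (4 * (1 / y))" by simp
    also have "\<dots> = ennreal 4 * ennreal (1 / y)" by (rule ennreal_mult) (use y in auto)
    finally show ?thesis by simp
  qed
  finally show ?thesis using Jn_upper[OF P s y] by (rule order_trans[rotated])
qed

lemma prob_sigma: "prob_space \<mu> \<Longrightarrow> sigma_finite_measure \<mu>"
  by (rule finite_measure.axioms(1)[OF prob_space.axioms(1)])

lemma prob_finite: "prob_space \<mu> \<Longrightarrow> finite_measure \<mu>"
  by (rule prob_space.axioms(1))

lemma PJ_fwd:
  fixes \<mu> :: "real measure" and T :: real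
  assumes P: "prob_space \<mu>" and s: "sets \<mu> = sets borel" and T: "T > 0"
    and fin: "(\<integral>\<^sup>+x. ennreal (ln (1 + x\<^sup>2)) \<partial>\<mu>) < \<infinity>"
  shows "(\<integral>\<^sup>+y\<in>{T<..}. Jn \<mu> y \<partial>lborel) < \<infinity>"
proof -
  define hk where "hk = (\<lambda>t y. ennreal (kk y t) * indicator {T<..} y)"
  have hkm: "(\<lambda>(t, y). hk t y) \<in> borel_measurable (borel \<Otimes>\<^sub>M borel)"
    unfolding hk_def kk_def by measurable
  have hkm': "(\<lambda>(y, t). hk t y) \<in> borel_measurable (borel \<Otimes>\<^sub>M borel)"
    unfolding hk_def kk_def by measurable
  have "(\<integral>\<^sup>+y\<in>{T<..}. Jn \<mu> y \<partial>lborel) \<le> (\<integral>\<^sup>+y. 4 * (\<integral>\<^sup>+t. hk t y \<partial>\<mu>) \<partial>lborel)"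
  proof (rule nn_integral_mono)
    fix y :: real
    show "Jn \<mu> y * indicator {T<..} y \<le> 4 * (\<integral>\<^sup>+t. hk t y \<partial>\<mu>)"
    proof (cases "T < y")
      case True
      then have y: "y > 0" using T by simp
      show ?thesis using Jn_upper[OF P s y] True unfolding hk_def by simp
    qed (simp add: hk_def)
  qed
  also have "\<dots> = 4 * (\<integral>\<^sup>+y. (\<integral>\<^sup>+t. hk t y \<partial>\<mu>) \<partial>lborel)"
    by (rule nn_integral_cmult) (simp only: measurable_lborel2, rule Wn_meas_inner[OF P s hkm'])
  also have "(\<integral>\<^sup>+y. (\<integral>\<^sup>+t. hk t y \<partial>\<mu>) \<partial>lborel) = (\<integral>\<^sup>+t. (\<integral>\<^sup>+y. hk t y \<partial>lborel) \<partial>\<mu>)"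
    by (rule tonelli_swap[OF prob_sigma[OF P] s hkm])
  also have "\<dots> = (\<integral>\<^sup>+t. ennreal (ln (1 + t\<^sup>2 / T\<^sup>2) / 2) \<partial>\<mu>)"
    unfolding hk_def kk_def K_int[OF T] ..
  also have "4 * \<dots> < \<infinity>"
    using log_fin_iff[OF prob_finite[OF P] s, of "T\<^sup>2"] T fin by (simp add: ennreal_mult_less_top)
  finally show ?thesis .
qed

lemma jf_lower:
  fixes y t s M :: real
  assumes y: "y > 0" and sM: "\<bar>s\<bar> \<le> M" and tM: "2 * M \<le> \<bar>t\<bar>" and My: "M \<le> y"
  shows "kk y t / 8 \<le> jf y t s"
proof -
  define a where "a = t\<^sup>2 + y\<^sup>2"
  have a: "a > 0" unfolding a_def using y by (simp add: add_nonneg_pos)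
  have "\<bar>t\<bar> - \<bar>s\<bar> \<le> \<bar>t - s\<bar>" by (rule abs_triangle_ineq2)
  then have h: "\<bar>t\<bar> / 2 \<le> \<bar>t - s\<bar>" using sM tM by linarith
  have "(\<bar>t\<bar> / 2)\<^sup>2 \<le> \<bar>t - s\<bar>\<^sup>2" by (rule power_mono[OF h]) simp
  then have ts: "t\<^sup>2 / 4 \<le> (t - s)\<^sup>2" by (simp add: power_divide)
  have "\<bar>s\<bar> \<le> y" using sM My by linarith
  then have "\<bar>s\<bar>\<^sup>2 \<le> y\<^sup>2" by (rule power_mono) simp
  then have sy: "s\<^sup>2 + y\<^sup>2 \<le> 2 * y\<^sup>2" by simp
  have p2: "0 < s\<^sup>2 + y\<^sup>2" using y by (simp add: add_nonneg_pos)
  have ka: "y\<^sup>2 + t\<^sup>2 = a" unfolding a_def by (simp add: add.commute)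
  have "kk y t / 8 = y * (t\<^sup>2 / 4) / (a * (2 * y\<^sup>2))"
    unfolding kk_def ka using y a by (simp add: field_simps power2_eq_square)
  also have "\<dots> \<le> y * (t - s)\<^sup>2 / (a * (s\<^sup>2 + y\<^sup>2))"
  proof (rule frac_le)
    show "0 \<le> y * (t - s)\<^sup>2" using y by simp
    show "y * (t\<^sup>2 / 4) \<le> y * (t - s)\<^sup>2" using ts y by (intro mult_left_mono) auto
    show "0 < a * (s\<^sup>2 + y\<^sup>2)" using a p2 by simp
    show "a * (s\<^sup>2 + y\<^sup>2) \<le> a * (2 * y\<^sup>2)" using a sy by (intro mult_left_mono) auto
  qed
  also have "\<dots> = jf y t s" unfolding jf_def a_def ..
  finally show ?thesis .
qed

lemma mass_half:
  fixes \<mu> :: "real measure"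
  assumes P: "prob_space \<mu>" and s: "sets \<mu> = sets borel"
  shows "\<exists>M\<ge>1. measure \<mu> {x. \<bar>x\<bar> \<le> M} \<ge> 1 / 2"
proof -
  interpret prob_space \<mu> by fact
  obtain M where M: "M \<ge> 1" "measure \<mu> {x. M < \<bar>x\<bar>} < 1 / 2"
    using tail_small[OF prob_finite[OF P] s, of "1/2"] by auto
  have sp: "space \<mu> = UNIV" using sets_eq_imp_space_eq[OF s] by simp
  have A: "{x::real. M < \<bar>x\<bar>} \<in> events" unfolding s by measurable
  have "{x::real. \<bar>x\<bar> \<le> M} = space \<mu> - {x. M < \<bar>x\<bar>}" using sp by auto
  then have "measure \<mu> {x. \<bar>x\<bar> \<le> M} = 1 - measure \<mu> {x. M < \<bar>x\<bar>}"
    using prob_compl[OF A] by simp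
  then show ?thesis using M by (intro exI[of _ M]) auto
qed

lemma PJ_bwd:
  fixes \<mu> :: "real measure" and T :: real
  assumes P: "prob_space \<mu>" and s: "sets \<mu> = sets borel" and T: "T > 0"
    and fin: "(\<integral>\<^sup>+y\<in>{T<..}. Jn \<mu> y \<partial>lborel) < \<infinity>"
  shows "(\<integral>\<^sup>+x. ennreal (ln (1 + x\<^sup>2)) \<partial>\<mu>) < \<infinity>"
proof -
  interpret prob_space \<mu> by fact
  obtain M where M: "M \<ge> 1" "measure \<mu> {x. \<bar>x\<bar> \<le> M} \<ge> 1 / 2"
    using mass_half[OF P s] by auto
  define AM where "AM = {x::real. \<bar>x\<bar> \<le> M}"
  define B where "B = {x::real. 2 * M \<le> \<bar>x\<bar>}"
  define T' where "T' = max T M"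
  have T': "T' > 0" "T \<le> T'" "M \<le> T'" unfolding T'_def using T by auto
  have AMs: "AM \<in> sets \<mu>" unfolding AM_def s by measurable
  have eAM: "emeasure \<mu> AM \<ge> ennreal (1 / 2)"
    using ennreal_leI[OF M(2)] unfolding AM_def emeasure_eq_measure .
  have kkm: "(\<lambda>t. indicator B t * ennreal (kk y t)) \<in> borel_measurable \<mu>" for y
    unfolding measurable_cong_sets[OF s refl] B_def kk_def by measurable
  have pt: "ennreal (1 / 16) * (\<integral>\<^sup>+t. indicator B t * ennreal (kk y t) \<partial>\<mu>) \<le> Jn \<mu> y"
    if y: "y > T'" for y
  proof -
    have y0: "y > 0" using y T' by simp
    have "ennreal (1 / 16) * (\<integral>\<^sup>+t. indicator B t * ennreal (kk y t) \<partial>\<mu>)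
        = (\<integral>\<^sup>+t. ennreal (1 / 16) * (indicator B t * ennreal (kk y t)) \<partial>\<mu>)"
      by (rule nn_integral_cmult[OF kkm, symmetric])
    also have "\<dots> \<le> (\<integral>\<^sup>+t. (indicator B t * ennreal (kk y t / 8)) * emeasure \<mu> AM \<partial>\<mu>)"
    proof (rule nn_integral_mono)
      fix t
      have "ennreal (1 / 16) * (indicator B t * ennreal (kk y t)) = (indicator B t * ennreal (kk y t / 8)) * ennreal (1 / 2)"
      proof -
        have k0: "0 \<le> kk y t" by (rule kk_nonneg[OF y0])
        have e1: "ennreal (1 / 16) * ennreal (kk y t) = ennreal (kk y t / 16)"
          using k0 by (subst ennreal_mult[symmetric]) auto
        have e2: "ennreal (kk y t / 8) * ennreal (1 / 2) = ennreal (kk y t / 16)"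
          using k0 by (subst ennreal_mult[symmetric]) auto
        show ?thesis
        proof (cases "t \<in> B")
          case True
          then show ?thesis using e1 e2 by simp
        qed simp
      qed
      also have "\<dots> \<le> (indicator B t * ennreal (kk y t / 8)) * emeasure \<mu> AM"
        by (rule mult_left_mono[OF eAM]) simp
      finally show "ennreal (1 / 16) * (indicator B t * ennreal (kk y t)) \<le> (indicator B t * ennreal (kk y t / 8)) * emeasure \<mu> AM" .
    qed
    also have "\<dots> = (\<integral>\<^sup>+t. (\<integral>\<^sup>+s. (indicator B t * ennreal (kk y t / 8)) * indicator AM s \<partial>\<mu>) \<partial>\<mu>)"
      by (intro nn_integral_cong) (simp add: nn_integral_cmult_indicator[OF AMs])
    also have "\<dots> \<le> (\<integral>\<^sup>+t. (\<integral>\<^sup>+s. ennreal (jf y t s) \<partial>\<mu>) \<partial>\<mu>)"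
    proof (intro nn_integral_mono)
      fix t s
      show "indicator B t * ennreal (kk y t / 8) * indicator AM s \<le> ennreal (jf y t s)"
      proof (cases "t \<in> B \<and> s \<in> AM")
        case True
        then have "kk y t / 8 \<le> jf y t s"
          using y T' unfolding B_def AM_def by (intro jf_lower[OF y0, of s M]) auto
        then show ?thesis using True by (simp add: ennreal_leI)
      next
        case False
        then show ?thesis by (auto simp: indicator_def)
      qed
    qed
    also have "\<dots> = Jn \<mu> y" by (rule Jn_expand[OF P s y0, symmetric])
    finally show ?thesis .
  qed
  define F where "F = (\<lambda>t y. indicator B t * ennreal (kk y t) * indicator {T'<..} y)"
  have Fm: "(\<lambda>(t, y). F t y) \<in> borel_measurable (borel \<Otimes>\<^sub>M borel)"
    unfolding F_def B_def kk_def by measurable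
  have Fm': "(\<lambda>(y, t). F t y) \<in> borel_measurable (borel \<Otimes>\<^sub>M borel)"
    unfolding F_def B_def kk_def by measurable
  define L where "L = (\<lambda>t::real. ln (1 + t\<^sup>2 / T'\<^sup>2) / 2)"
  have "ennreal (1 / 16) * (\<integral>\<^sup>+t. indicator B t * ennreal (L t) \<partial>\<mu>)
      = ennreal (1 / 16) * (\<integral>\<^sup>+t. (\<integral>\<^sup>+y. F t y \<partial>lborel) \<partial>\<mu>)"
  proof -
    have "(\<integral>\<^sup>+y. F t y \<partial>lborel) = indicator B t * ennreal (L t)" for t
    proof -
      have "(\<integral>\<^sup>+y. F t y \<partial>lborel) = indicator B t * (\<integral>\<^sup>+y\<in>{T'<..}. ennreal (kk y t) \<partial>lborel)"
        unfolding F_def by (subst nn_integral_cmult[symmetric]) (auto simp: kk_def mult.assoc)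
      also have "\<dots> = indicator B t * ennreal (L t)"
        unfolding kk_def K_int[OF T'(1)] L_def ..
      finally show ?thesis .
    qed
    then show ?thesis by simp
  qed
  also have "\<dots> = ennreal (1 / 16) * (\<integral>\<^sup>+y. (\<integral>\<^sup>+t. F t y \<partial>\<mu>) \<partial>lborel)"
    by (simp only: tonelli_swap[OF prob_sigma[OF P] s Fm])
  also have "\<dots> = (\<integral>\<^sup>+y. ennreal (1 / 16) * (\<integral>\<^sup>+t. F t y \<partial>\<mu>) \<partial>lborel)"
    by (rule nn_integral_cmult[symmetric]) (simp only: measurable_lborel2, rule Wn_meas_inner[OF P s Fm'])
  also have "\<dots> \<le> (\<integral>\<^sup>+y\<in>{T<..}. Jn \<mu> y \<partial>lborel)"
  proof (rule nn_integral_mono)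
    fix y :: real
    show "ennreal (1 / 16) * (\<integral>\<^sup>+t. F t y \<partial>\<mu>) \<le> Jn \<mu> y * indicator {T<..} y"
    proof (cases "T' < y")
      case True
      then have "T < y" using T' by simp
      have "(\<integral>\<^sup>+t. F t y \<partial>\<mu>) = (\<integral>\<^sup>+t. indicator B t * ennreal (kk y t) \<partial>\<mu>)"
        unfolding F_def using True by simp
      then show ?thesis using pt[OF True] \<open>T < y\<close> by simp
    next
      case False
      then show ?thesis unfolding F_def by simp
    qed
  qed
  also have "\<dots> < \<infinity>" by (rule fin)
  finally have f16: "ennreal (1 / 16) * (\<integral>\<^sup>+t. indicator B t * ennreal (L t) \<partial>\<mu>) < \<infinity>" .
  have gfin: "(\<integral>\<^sup>+t. indicator B t * ennreal (L t) \<partial>\<mu>) < \<infinity>"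
    using f16 by (auto simp: ennreal_mult_less_top)
  have gm: "(\<lambda>t. indicator B t * ennreal (L t)) \<in> borel_measurable \<mu>"
    unfolding measurable_cong_sets[OF s refl] B_def L_def by measurable
  show ?thesis
  proof (rule fin_dom_enn[where c=2 and d="ennreal (ln (1 + T'\<^sup>2)) + ennreal (ln (1 + 4 * M\<^sup>2))",
        OF prob_finite[OF P] gm _ _ _ gfin])
    fix t :: real
    have L0: "0 \<le> L t" unfolding L_def using T' by simp
    have l1: "0 \<le> ln (1 + T'\<^sup>2)" and l2: "0 \<le> ln (1 + 4 * M\<^sup>2)" by simp_all
    show "ennreal (ln (1 + t\<^sup>2)) \<le> 2 * (indicator B t * ennreal (L t)) + (ennreal (ln (1 + T'\<^sup>2)) + ennreal (ln (1 + 4 * M\<^sup>2)))"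
    proof (cases "t \<in> B")
      case True
      have T2: "T'\<^sup>2 > 0" using T' by simp
      have "ln (1 + t\<^sup>2) \<le> 2 * L t + ln (1 + T'\<^sup>2)"
        using ln_cmp1[OF T2, of t] unfolding L_def by simp
      then have "ennreal (ln (1 + t\<^sup>2)) \<le> ennreal (2 * L t + ln (1 + T'\<^sup>2))" by (rule ennreal_leI)
      also have "\<dots> = 2 * ennreal (L t) + ennreal (ln (1 + T'\<^sup>2))"
        using L0 l1 by (simp add: ennreal_plus ennreal_mult)
      also have "\<dots> \<le> 2 * (indicator B t * ennreal (L t)) + (ennreal (ln (1 + T'\<^sup>2)) + ennreal (ln (1 + 4 * M\<^sup>2)))"
        using True by (simp add: add.assoc add_increasing2)
      finally show ?thesis .
    next
      case False
      then have "\<bar>t\<bar> \<le> 2 * M" unfolding B_def by simp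
      then have "\<bar>t\<bar>\<^sup>2 \<le> (2 * M)\<^sup>2" by (rule power_mono) simp
      then have "t\<^sup>2 \<le> 4 * M\<^sup>2" by (simp add: power_mult_distrib)
      then have "ln (1 + t\<^sup>2) \<le> ln (1 + 4 * M\<^sup>2)" by (simp add: add_pos_nonneg)
      then have "ennreal (ln (1 + t\<^sup>2)) \<le> ennreal (ln (1 + 4 * M\<^sup>2))" by (rule ennreal_leI)
      also have "\<dots> \<le> 2 * (indicator B t * ennreal (L t)) + (ennreal (ln (1 + T'\<^sup>2)) + ennreal (ln (1 + 4 * M\<^sup>2)))"
        by (simp add: add_increasing)
      finally show ?thesis .
    qed
  qed simp_all
qed

lemma nn_param_meas:
  fixes \<mu> :: "real measure" and N :: "'a measure"
  assumes M: "sigma_finite_measure \<mu>" and s: "sets \<mu> = sets borel"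
    and f: "(\<lambda>(x, t). f x t) \<in> borel_measurable (N \<Otimes>\<^sub>M borel)"
  shows "(\<lambda>x. \<integral>\<^sup>+t. f x t \<partial>\<mu>) \<in> borel_measurable N"
proof -
  interpret sigma_finite_measure \<mu> by fact
  have ss: "sets (N \<Otimes>\<^sub>M \<mu>) = sets (N \<Otimes>\<^sub>M borel)"
    using s by (intro sets_pair_measure_cong) simp_all
  have "(\<lambda>(x, t). f x t) \<in> borel_measurable (N \<Otimes>\<^sub>M \<mu>)"
    unfolding measurable_cong_sets[OF ss refl] by (rule f)
  then show ?thesis by (rule borel_measurable_nn_integral)
qed

lemma param_meas:
  fixes \<mu> :: "real measure" and N :: "'a measure" and f :: "'a \<Rightarrow> real \<Rightarrow> 'b::{banach, second_countable_topology}"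
  assumes M: "sigma_finite_measure \<mu>" and s: "sets \<mu> = sets borel"
    and f: "(\<lambda>(x, t). f x t) \<in> borel_measurable (N \<Otimes>\<^sub>M borel)"
  shows "(\<lambda>x. \<integral>t. f x t \<partial>\<mu>) \<in> borel_measurable N"
proof -
  interpret sigma_finite_measure \<mu> by fact
  have ss: "sets (N \<Otimes>\<^sub>M \<mu>) = sets (N \<Otimes>\<^sub>M borel)"
    using s by (intro sets_pair_measure_cong) simp_all
  have "(\<lambda>(x, t). f x t) \<in> borel_measurable (N \<Otimes>\<^sub>M \<mu>)"
    unfolding measurable_cong_sets[OF ss refl] by (rule f)
  then show ?thesis by (rule borel_measurable_lebesgue_integral)
qed

definition JJ :: "real measure \<Rightarrow> real \<Rightarrow> ennreal" where
  "JJ \<mu> y = (\<integral>\<^sup>+t. (\<integral>\<^sup>+s. ennreal (jf y t s) \<partial>\<mu>) \<partial>\<mu>)"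

lemma JJ_meas:
  fixes \<mu> :: "real measure"
  assumes P: "prob_space \<mu>" and s: "sets \<mu> = sets borel"
  shows "JJ \<mu> \<in> borel_measurable borel"
proof -
  have "(\<lambda>x. \<integral>\<^sup>+s. ennreal (jf (fst x) (snd x) s) \<partial>\<mu>) \<in> borel_measurable (borel \<Otimes>\<^sub>M borel)"
    by (rule nn_param_meas[OF prob_sigma[OF P] s]) (simp add: jf_def split_beta', measurable)
  then have m: "(\<lambda>(y, t). \<integral>\<^sup>+s. ennreal (jf y t s) \<partial>\<mu>) \<in> borel_measurable (borel \<Otimes>\<^sub>M borel)"
    by (simp add: split_beta')
  have "(\<lambda>y. \<integral>\<^sup>+t. (\<integral>\<^sup>+s. ennreal (jf y t s) \<partial>\<mu>) \<partial>\<mu>) \<in> borel_measurable borel"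
    by (rule nn_param_meas[OF prob_sigma[OF P] s m])
  then show ?thesis unfolding JJ_def[abs_def] .
qed

lemma Jn_JJ:
  fixes \<mu> :: "real measure"
  assumes P: "prob_space \<mu>" and s: "sets \<mu> = sets borel" and T: "T > 0"
  shows "(\<integral>\<^sup>+y\<in>{T<..}. Jn \<mu> y \<partial>lborel) = (\<integral>\<^sup>+y\<in>{T<..}. JJ \<mu> y \<partial>lborel)"
proof (rule nn_integral_cong)
  fix y :: real
  show "Jn \<mu> y * indicator {T<..} y = JJ \<mu> y * indicator {T<..} y"
  proof (cases "T < y")
    case True
    then have "y > 0" using T by simp
    then show ?thesis using Jn_expand[OF P s] unfolding JJ_def by simp
  qed simp
qed

lemma cauchy_meas:
  fixes \<mu> :: "real measure"
  assumes P: "prob_space \<mu>" and s: "sets \<mu> = sets borel"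
  shows "(\<lambda>y. cauchy_transform \<mu> (\<i> * complex_of_real y)) \<in> borel_measurable borel"
  unfolding cauchy_transform_def
  by (rule param_meas[OF prob_sigma[OF P] s]) measurable

lemma Aint_iy_le:
  fixes \<mu> :: "real measure"
  assumes P: "prob_space \<mu>" and s: "sets \<mu> = sets borel" and y: "y > 0"
  shows "Aint \<mu> (\<i> * complex_of_real y) \<le> 1 / y\<^sup>2"
proof -
  interpret prob_space \<mu> by fact
  have v: "Im (\<i> * complex_of_real y) > 0" using y by simp
  have am: "(\<lambda>t. (cmod (aa (\<i> * complex_of_real y) t))\<^sup>2) \<in> borel_measurable \<mu>"
    unfolding measurable_cong_sets[OF s refl] by measurable
  have b: "(cmod (aa (\<i> * complex_of_real y) t))\<^sup>2 \<le> (1 / y)\<^sup>2" for t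
    using aa_bound[OF v, of t] by (intro power_mono) auto
  have "Aint \<mu> (\<i> * complex_of_real y) \<le> (\<integral>t. (1 / y)\<^sup>2 \<partial>\<mu>)"
    unfolding Aint_def
  proof (rule integral_mono)
    show "integrable \<mu> (\<lambda>t. (cmod (aa (\<i> * complex_of_real y) t))\<^sup>2)"
      by (rule integrable_const_bound[where B="(1/y)\<^sup>2"]) (use b am in auto)
  qed (use b in auto)
  then show ?thesis by (simp add: prob_space power_divide)
qed

lemma Aint_iy_ge:
  fixes \<mu> :: "real measure"
  assumes P: "prob_space \<mu>" and s: "sets \<mu> = sets borel" and y: "y > 0"
    and M: "measure \<mu> {x. \<bar>x\<bar> \<le> M} \<ge> 1 / 2"
  shows "1 / (2 * (M\<^sup>2 + y\<^sup>2)) \<le> Aint \<mu> (\<i> * complex_of_real y)"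
proof -
  interpret prob_space \<mu> by fact
  define AM where "AM = {x::real. \<bar>x\<bar> \<le> M}"
  have AMs: "AM \<in> sets \<mu>" unfolding AM_def s by measurable
  have v: "Im (\<i> * complex_of_real y) > 0" using y by simp
  have am: "(\<lambda>t. (cmod (aa (\<i> * complex_of_real y) t))\<^sup>2) \<in> borel_measurable \<mu>"
    unfolding measurable_cong_sets[OF s refl] by measurable
  have b: "(cmod (aa (\<i> * complex_of_real y) t))\<^sup>2 \<le> (1 / y)\<^sup>2" for t
    using aa_bound[OF v, of t] by (intro power_mono) auto
  have e: "(cmod (aa (\<i> * complex_of_real y) t))\<^sup>2 = 1 / (t\<^sup>2 + y\<^sup>2)" for t
    unfolding aa_def by (simp add: norm_divide power_one_over cmod_w_t)
  have p: "0 < M\<^sup>2 + y\<^sup>2" using y by (simp add: add_nonneg_pos)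
  have "1 / (2 * (M\<^sup>2 + y\<^sup>2)) = (1 / 2) * (1 / (M\<^sup>2 + y\<^sup>2))" by simp
  also have "\<dots> \<le> measure \<mu> AM * (1 / (M\<^sup>2 + y\<^sup>2))"
    using M p unfolding AM_def by (intro mult_right_mono) auto
  also have "\<dots> = (\<integral>t. indicator AM t * (1 / (M\<^sup>2 + y\<^sup>2)) \<partial>\<mu>)"
    using AMs by simp
  also have "\<dots> \<le> Aint \<mu> (\<i> * complex_of_real y)"
    unfolding Aint_def
  proof (rule integral_mono)
    show "integrable \<mu> (\<lambda>t. indicator AM t * (1 / (M\<^sup>2 + y\<^sup>2)))"
      using AMs by (intro integrable_mult_left integrable_real_indicator) (auto simp: less_top[symmetric])
    show "integrable \<mu> (\<lambda>t. (cmod (aa (\<i> * complex_of_real y) t))\<^sup>2)"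
      by (rule integrable_const_bound[where B="(1/y)\<^sup>2"]) (use b am in auto)
    fix t
    show "indicator AM t * (1 / (M\<^sup>2 + y\<^sup>2)) \<le> (cmod (aa (\<i> * complex_of_real y) t))\<^sup>2"
    proof (cases "t \<in> AM")
      case True
      then have "\<bar>t\<bar> \<le> M" unfolding AM_def by simp
      then have "\<bar>t\<bar>\<^sup>2 \<le> M\<^sup>2" by (intro power_mono) auto
      then have "t\<^sup>2 + y\<^sup>2 \<le> M\<^sup>2 + y\<^sup>2" by simp
      moreover have "0 < t\<^sup>2 + y\<^sup>2" using y by (simp add: add_nonneg_pos)
      ultimately have "1 / (M\<^sup>2 + y\<^sup>2) \<le> 1 / (t\<^sup>2 + y\<^sup>2)" by (intro divide_left_mono) auto
      then show ?thesis using True unfolding e by simp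
    qed (simp add: e)
  qed
  finally show ?thesis .
qed

lemma f5_bounds:
  fixes \<mu> :: "real measure" and y c :: real
  assumes P: "prob_space \<mu>" and s: "sets \<mu> = sets borel" and y: "y > 0" and c: "c > 0"
    and Alow: "c / y\<^sup>2 \<le> Aint \<mu> (\<i> * complex_of_real y)"
  shows "ennreal ((Im (F_transform \<mu> (\<i> * complex_of_real y)) - y) / y\<^sup>2) \<le> ennreal (1 / (2 * c\<^sup>2)) * JJ \<mu> y"
    and "JJ \<mu> y \<le> 2 * ennreal ((Im (F_transform \<mu> (\<i> * complex_of_real y)) - y) / y\<^sup>2)"
proof -
  define w where "w = \<i> * complex_of_real y"
  have v: "Im w > 0" unfolding w_def using y by simp
  have Imw: "Im w = y" unfolding w_def by simp
  define G where "G = cauchy_transform \<mu> w"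
  define A where "A = Aint \<mu> w"
  define g2 where "g2 = (cmod G)\<^sup>2"
  define D where "D = A - g2"
  note L = L1[OF P s v, folded G_def A_def g2_def, unfolded Imw]
  have W: "Wn \<mu> w = ennreal (2 * D)" unfolding D_def g2_def using L(1) .
  have D0: "D \<ge> 0" unfolding D_def g2_def using L(2) by simp
  have IG: "Im G = - y * A" using L(3) .
  have Aup: "A \<le> 1 / y\<^sup>2" unfolding A_def w_def by (rule Aint_iy_le[OF P s y])
  have Alow': "c / y\<^sup>2 \<le> A" unfolding A_def w_def by (rule Alow)
  have cy: "0 \<le> c / y\<^sup>2" using c y by simp
  have g2A: "g2 \<le> A" using D0 unfolding D_def by simp
  have "(c / y\<^sup>2)\<^sup>2 \<le> A\<^sup>2" by (rule power_mono[OF Alow' cy])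
  then have "y\<^sup>2 * (c / y\<^sup>2)\<^sup>2 \<le> y\<^sup>2 * A\<^sup>2" by (rule mult_left_mono) simp
  also have "y\<^sup>2 * A\<^sup>2 = (Im G)\<^sup>2" unfolding IG by (simp add: power_mult_distrib)
  also have "(Im G)\<^sup>2 \<le> g2" unfolding g2_def by (simp add: cmod_power2)
  finally have g2low0: "y\<^sup>2 * (c / y\<^sup>2)\<^sup>2 \<le> g2" .
  have e0: "y\<^sup>2 * (c / y\<^sup>2)\<^sup>2 = c\<^sup>2 / y\<^sup>2" using y by (simp add: power2_eq_square field_simps)
  have g2low: "c\<^sup>2 / y\<^sup>2 \<le> g2" using g2low0 unfolding e0 .
  have g2pos: "g2 > 0" using g2low c y by (smt (verit) divide_pos_pos zero_less_power)
  have Gnz: "G \<noteq> 0" using g2pos unfolding g2_def by auto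
  have ImF: "Im (F_transform \<mu> w) = y * A / g2"
    using F_Im[of \<mu> w] Gnz unfolding G_def[symmetric] g2_def[symmetric] IG by simp
  have f5: "(Im (F_transform \<mu> w) - y) / y\<^sup>2 = D / (y * g2)"
    unfolding ImF D_def using y g2pos by (simp add: field_simps power2_eq_square)
  have JJe: "JJ \<mu> y = ennreal (2 * y * D)"
  proof -
    have "JJ \<mu> y = Jn \<mu> y" unfolding JJ_def using Jn_expand[OF P s y] by simp
    also have "\<dots> = ennreal y * ennreal (2 * D)" unfolding Jn_def W[unfolded w_def] ..
    also have "\<dots> = ennreal (2 * y * D)" using y D0 by (simp add: ennreal_mult[symmetric] mult_ac del: ennreal_mult)
    finally show ?thesis .
  qed
  have h1: "c\<^sup>2 \<le> y\<^sup>2 * g2" using g2low y by (simp add: divide_le_eq mult.commute)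
  have "A * y\<^sup>2 \<le> 1" using Aup y by (simp add: le_divide_eq)
  moreover have "g2 * y\<^sup>2 \<le> A * y\<^sup>2" using g2A by (rule mult_right_mono) simp
  ultimately have h2: "y\<^sup>2 * g2 \<le> 1" by (simp add: mult.commute)
  have yg: "0 < y * g2" using y g2pos by simp
  have c2: "0 < c\<^sup>2" using c by simp
  have i1: "D / (y * g2) \<le> y * D / c\<^sup>2"
  proof -
    have "D / (y * g2) = (D * c\<^sup>2) / (c\<^sup>2 * (y * g2))" using c2 by simp
    also have "\<dots> \<le> (D * (y\<^sup>2 * g2)) / (c\<^sup>2 * (y * g2))"
      using h1 D0 c2 yg by (intro divide_right_mono mult_left_mono) auto
    also have "\<dots> = y * D / c\<^sup>2" using y g2pos c2 by (simp add: field_simps power2_eq_square)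
    finally show ?thesis .
  qed
  have i2: "y * D \<le> D / (y * g2)"
  proof -
    have "y * D = (D * (y\<^sup>2 * g2)) / (y * g2)" using y g2pos by (simp add: field_simps power2_eq_square)
    also have "\<dots> \<le> (D * 1) / (y * g2)"
      using h2 D0 yg by (intro divide_right_mono mult_left_mono) auto
    finally show ?thesis by simp
  qed
  show "ennreal ((Im (F_transform \<mu> (\<i> * complex_of_real y)) - y) / y\<^sup>2) \<le> ennreal (1 / (2 * c\<^sup>2)) * JJ \<mu> y"
  proof -
    have "ennreal ((Im (F_transform \<mu> (\<i> * complex_of_real y)) - y) / y\<^sup>2) = ennreal (D / (y * g2))"
      using f5 unfolding w_def by simp
    also have "\<dots> \<le> ennreal (y * D / c\<^sup>2)" using i1 by (rule ennreal_leI)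
    also have "y * D / c\<^sup>2 = (1 / (2 * c\<^sup>2)) * (2 * y * D)" using c2 by simp
    also have "ennreal \<dots> = ennreal (1 / (2 * c\<^sup>2)) * ennreal (2 * y * D)"
      using y D0 c2 by (intro ennreal_mult) auto
    finally show ?thesis unfolding JJe .
  qed
  show "JJ \<mu> y \<le> 2 * ennreal ((Im (F_transform \<mu> (\<i> * complex_of_real y)) - y) / y\<^sup>2)"
  proof -
    have "ennreal (2 * y * D) \<le> ennreal (2 * (D / (y * g2)))" using i2 by (intro ennreal_leI) simp
    also have "\<dots> = ennreal 2 * ennreal (D / (y * g2))" using D0 yg by (intro ennreal_mult) auto
    also have "\<dots> = 2 * ennreal (D / (y * g2))" by simp
    finally show ?thesis unfolding JJe using f5 unfolding w_def by simp
  qed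
qed

lemma P5_iff:
  fixes \<mu> :: "real measure" and T :: real
  assumes P: "prob_space \<mu>" and s: "sets \<mu> = sets borel" and T: "T > 0"
  shows "(\<integral>\<^sup>+y\<in>{T<..}. ennreal ((Im (F_transform \<mu> (\<i> * complex_of_real y)) - y) / y\<^sup>2) \<partial>lborel) < \<infinity>
     \<longleftrightarrow> (\<integral>\<^sup>+y\<in>{T<..}. JJ \<mu> y \<partial>lborel) < \<infinity>"
proof -
  obtain M where M: "M \<ge> 1" "measure \<mu> {x. \<bar>x\<bar> \<le> M} \<ge> 1 / 2"
    using mass_half[OF P s] by auto
  define c where "c = 1 / (2 * (M\<^sup>2 / T\<^sup>2 + 1))"
  have c: "c > 0" unfolding c_def by (simp add: add_nonneg_pos)
  have Al: "c / y\<^sup>2 \<le> Aint \<mu> (\<i> * complex_of_real y)" if y: "T < y" for y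
  proof -
    have y0: "y > 0" using y T by simp
    have "T\<^sup>2 \<le> y\<^sup>2" using y T by (intro power_mono) auto
    then have "1 \<le> y\<^sup>2 / T\<^sup>2" using T by simp
    then have "M\<^sup>2 * 1 \<le> M\<^sup>2 * (y\<^sup>2 / T\<^sup>2)" by (intro mult_left_mono) auto
    then have "M\<^sup>2 + y\<^sup>2 \<le> (M\<^sup>2 / T\<^sup>2 + 1) * y\<^sup>2" by (simp add: algebra_simps)
    moreover have "0 < M\<^sup>2 + y\<^sup>2" using y0 by (simp add: add_nonneg_pos)
    ultimately have "1 / (2 * ((M\<^sup>2 / T\<^sup>2 + 1) * y\<^sup>2)) \<le> 1 / (2 * (M\<^sup>2 + y\<^sup>2))"
      by (intro divide_left_mono) auto
    also have "\<dots> \<le> Aint \<mu> (\<i> * complex_of_real y)" by (rule Aint_iy_ge[OF P s y0 M(2)])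
    finally show ?thesis by (simp only: c_def divide_divide_eq_left mult.assoc)
  qed
  note [measurable] = cauchy_meas[OF P s]
  have f5m: "(\<lambda>y. ennreal ((Im (F_transform \<mu> (\<i> * complex_of_real y)) - y) / y\<^sup>2)) \<in> borel_measurable borel"
    unfolding F_transform_def by measurable
  show ?thesis
  proof
    assume fin: "(\<integral>\<^sup>+y\<in>{T<..}. ennreal ((Im (F_transform \<mu> (\<i> * complex_of_real y)) - y) / y\<^sup>2) \<partial>lborel) < \<infinity>"
    show "(\<integral>\<^sup>+y\<in>{T<..}. JJ \<mu> y \<partial>lborel) < \<infinity>"
    proof (rule fin_cmp[OF f5m order_refl _ _ fin, where B=0 and C=2])
      fix y assume "T < y"
      then show "JJ \<mu> y \<le> ennreal 2 * ennreal ((Im (F_transform \<mu> (\<i> * complex_of_real y)) - y) / y\<^sup>2)"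
        using f5_bounds(2)[OF P s _ c Al] T by simp
    qed simp
  next
    assume fin: "(\<integral>\<^sup>+y\<in>{T<..}. JJ \<mu> y \<partial>lborel) < \<infinity>"
    show "(\<integral>\<^sup>+y\<in>{T<..}. ennreal ((Im (F_transform \<mu> (\<i> * complex_of_real y)) - y) / y\<^sup>2) \<partial>lborel) < \<infinity>"
    proof (rule fin_cmp[OF JJ_meas[OF P s] order_refl _ _ fin, where B=0 and C="1 / (2 * c\<^sup>2)"])
      fix y assume "T < y"
      then show "ennreal ((Im (F_transform \<mu> (\<i> * complex_of_real y)) - y) / y\<^sup>2) \<le> ennreal (1 / (2 * c\<^sup>2)) * JJ \<mu> y"
        using f5_bounds(1)[OF P s _ c Al] T by simp
    qed simp
  qed
qed

lemma dist_cmp: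
  fixes y v u t K :: real
  assumes y: "y > 0" and v1: "y / 2 \<le> v" and v2: "v \<le> y" and u: "\<bar>u\<bar> \<le> K * y" and K: "K \<ge> 0"
  shows "t\<^sup>2 + y\<^sup>2 \<le> (8 * K\<^sup>2 + 4) * ((u - t)\<^sup>2 + v\<^sup>2)"
    and "(u - t)\<^sup>2 + v\<^sup>2 \<le> (8 * K\<^sup>2 + 4) * (t\<^sup>2 + y\<^sup>2)"
proof -
  have v0: "v \<ge> 0" using v1 y by simp
  have "\<bar>u\<bar>\<^sup>2 \<le> (K * y)\<^sup>2" by (rule power_mono[OF u]) simp
  then have uK: "u\<^sup>2 \<le> K\<^sup>2 * y\<^sup>2" by (simp add: power_mult_distrib)
  have "y\<^sup>2 \<le> (2 * v)\<^sup>2" using v1 y by (intro power_mono) auto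
  then have yv: "y\<^sup>2 \<le> 4 * v\<^sup>2" by (simp add: power_mult_distrib)
  have vy: "v\<^sup>2 \<le> y\<^sup>2" using v0 v2 by (intro power_mono) auto
  have ut: "(u - t)\<^sup>2 \<le> 2 * u\<^sup>2 + 2 * t\<^sup>2"
  proof -
    have "0 \<le> (u + t)\<^sup>2" by simp
    then show ?thesis by (simp add: power2_diff power2_sum)
  qed
  have tu: "t\<^sup>2 \<le> 2 * (u - t)\<^sup>2 + 2 * u\<^sup>2"
  proof -
    have "0 \<le> (t - 2 * u)\<^sup>2" by simp
    then show ?thesis by (simp add: power2_diff power2_sum power_mult_distrib algebra_simps)
  qed
  have K2: "K\<^sup>2 * y\<^sup>2 \<le> K\<^sup>2 * (4 * v\<^sup>2)" using yv by (rule mult_left_mono) simp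
  have n1: "0 \<le> K\<^sup>2 * (u - t)\<^sup>2" "0 \<le> K\<^sup>2 * t\<^sup>2" "0 \<le> (u - t)\<^sup>2" "0 \<le> t\<^sup>2" "0 \<le> v\<^sup>2" "0 \<le> K\<^sup>2 * y\<^sup>2"
    "0 \<le> K\<^sup>2 * v\<^sup>2" by simp_all
  have e1: "(8 * K\<^sup>2 + 4) * ((u - t)\<^sup>2 + v\<^sup>2) = 8 * (K\<^sup>2 * (u - t)\<^sup>2) + 4 * (u - t)\<^sup>2 + 8 * (K\<^sup>2 * v\<^sup>2) + 4 * v\<^sup>2"
    by (simp add: algebra_simps)
  have e2: "(8 * K\<^sup>2 + 4) * (t\<^sup>2 + y\<^sup>2) = 8 * (K\<^sup>2 * t\<^sup>2) + 4 * t\<^sup>2 + 8 * (K\<^sup>2 * y\<^sup>2) + 4 * y\<^sup>2"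
    by (simp add: algebra_simps)
  have e3: "K\<^sup>2 * (4 * v\<^sup>2) = 4 * (K\<^sup>2 * v\<^sup>2)" by simp
  show "t\<^sup>2 + y\<^sup>2 \<le> (8 * K\<^sup>2 + 4) * ((u - t)\<^sup>2 + v\<^sup>2)"
    unfolding e1 using tu uK yv K2 n1 unfolding e3 by linarith
  show "(u - t)\<^sup>2 + v\<^sup>2 \<le> (8 * K\<^sup>2 + 4) * (t\<^sup>2 + y\<^sup>2)"
    unfolding e2 using ut uK vy n1 by linarith
qed

lemma sub_point:
  fixes \<mu> \<sigma> :: "real measure" and \<gamma> y :: real
  assumes P: "prob_space \<mu>" and s: "sets \<mu> = sets borel"
    and sf: "finite_measure \<sigma>" and ss: "sets \<sigma> = sets borel"
    and y: "y \<ge> 1"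
    and Sle: "(\<integral>x. (1 + x\<^sup>2) / (x\<^sup>2 + y\<^sup>2) \<partial>\<sigma>) \<le> 1 / 2"
    and cone1: "Im (\<i> * complex_of_real y + phi_repr \<gamma> \<sigma> (\<i> * complex_of_real y)) > 0"
    and cone2: "F_transform \<mu> (\<i> * complex_of_real y + phi_repr \<gamma> \<sigma> (\<i> * complex_of_real y)) = \<i> * complex_of_real y"
    and Kdef: "K = \<bar>\<gamma>\<bar> + measure \<sigma> (space \<sigma>)"
    and Cdef: "C = 8 * K\<^sup>2 + 4"
  shows "ennreal (- Im (phi_repr \<gamma> \<sigma> (\<i> * complex_of_real y)) / y\<^sup>2) \<le> ennreal (C\<^sup>2 / 2) * JJ \<mu> y"
    and "JJ \<mu> y \<le> ennreal (4 * C\<^sup>2) * ennreal (- Im (phi_repr \<gamma> \<sigma> (\<i> * complex_of_real y)) / y\<^sup>2)"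
proof -
  interpret \<sigma>: finite_measure \<sigma> by fact
  have y0: "y > 0" using y by simp
  define z where "z = \<i> * complex_of_real y"
  define p where "p = phi_repr \<gamma> \<sigma> z"
  define w where "w = z + p"
  define S where "S = (\<integral>x. (1 + x\<^sup>2) / (x\<^sup>2 + y\<^sup>2) \<partial>\<sigma>)"
  define v where "v = Im w"
  define u where "u = Re w"
  have K0: "K \<ge> 0" unfolding Kdef by simp
  have C0: "C > 0" unfolding Cdef by (simp add: add_nonneg_pos)
  have S0: "S \<ge> 0" unfolding S_def by (rule integral_nonneg_AE) (simp add: add_nonneg_nonneg)
  have S2: "S \<le> 1 / 2" unfolding S_def by (rule Sle)
  have mIm: "- Im p = y * S"
  proof -
    have "- Im p = (\<integral>x. y * ((1 + x\<^sup>2) / (x\<^sup>2 + y\<^sup>2)) \<partial>\<sigma>)"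
      unfolding p_def z_def phi_Im[OF sf ss y0] by simp
    also have "\<dots> = y * S" unfolding S_def by (rule integral_mult_right_zero)
    finally show ?thesis .
  qed
  have vdef: "v = y - y * S" unfolding v_def w_def z_def using mIm by simp
  have v1: "y / 2 \<le> v" unfolding vdef using S2 y0 by (simp add: field_simps)
  have v2: "v \<le> y" unfolding vdef using S0 y0 by simp
  have v0: "v > 0" using v1 y0 by simp
  have ueq: "u = Re p" unfolding u_def w_def z_def by simp
  have "\<bar>u\<bar> \<le> \<bar>\<gamma>\<bar> + measure \<sigma> (space \<sigma>) * y"
    unfolding ueq p_def z_def by (rule phi_Re_bound[OF sf ss y])
  also have "\<dots> \<le> K * y"
  proof -
    have "\<bar>\<gamma>\<bar> * 1 \<le> \<bar>\<gamma>\<bar> * y" using y by (intro mult_left_mono) auto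
    then show ?thesis unfolding Kdef by (simp add: algebra_simps)
  qed
  finally have uK: "\<bar>u\<bar> \<le> K * y" .
  have vw: "Im w > 0" using cone1 unfolding w_def z_def p_def .
  define G where "G = cauchy_transform \<mu> w"
  have FG: "1 / G = z" using cone2 unfolding F_transform_def G_def w_def z_def p_def .
  have zn: "z \<noteq> 0" unfolding z_def using y0 by simp
  have Gn: "G \<noteq> 0" using FG zn by auto
  have Gz: "G = 1 / z" using FG Gn zn by (metis divide_divide_eq_right div_by_1 divide_self_if)
  have ImG: "Im G = - 1 / y" unfolding Gz z_def using y0 by (simp add: Im_divide power2_eq_square)
  have g2: "(cmod G)\<^sup>2 = 1 / y\<^sup>2" unfolding Gz z_def using y0 by (simp add: norm_divide power_divide norm_mult)
  note L = L1[OF P s vw, folded G_def, unfolded g2, folded v_def]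
  have A: "Aint \<mu> w = 1 / (v * y)" using L(3) v0 y0 unfolding ImG by (simp add: field_simps)
  have f3: "- Im p / y\<^sup>2 = v / 2 * (2 * (Aint \<mu> w - 1 / y\<^sup>2))"
  proof -
    have mI: "- Im p = y - v" using mIm vdef by simp
    have "(y - v) / y\<^sup>2 = v / 2 * (2 * (1 / (v * y) - 1 / y\<^sup>2))"
      using v0 y0 by (simp add: field_simps power2_eq_square)
    then show ?thesis unfolding A mI .
  qed
  have Wr0: "0 \<le> 2 * (Aint \<mu> w - 1 / y\<^sup>2)" using L(2) by simp
  have f3e: "ennreal (- Im p / y\<^sup>2) = ennreal (v / 2) * Wn \<mu> w"
    unfolding f3 L(1) using v0 Wr0 by (intro ennreal_mult) auto
  have dw: "(cmod (w - complex_of_real t))\<^sup>2 = (u - t)\<^sup>2 + v\<^sup>2" for t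
    unfolding cmod_w_t u_def v_def ..
  have dz: "(cmod (z - complex_of_real t))\<^sup>2 = t\<^sup>2 + y\<^sup>2" for t
    unfolding cmod_w_t z_def by simp
  have zv: "Im z > 0" unfolding z_def using y0 by simp
  have W1: "Wn \<mu> w \<le> ennreal (C\<^sup>2) * Wn \<mu> z"
    by (rule Wn_cmp[OF P s vw zv C0]) (unfold dw dz Cdef, rule dist_cmp(1)[OF y0 v1 v2 uK K0])
  have W2: "Wn \<mu> z \<le> ennreal (C\<^sup>2) * Wn \<mu> w"
    by (rule Wn_cmp[OF P s zv vw C0]) (unfold dw dz Cdef, rule dist_cmp(2)[OF y0 v1 v2 uK K0])
  have JJe: "JJ \<mu> y = ennreal y * Wn \<mu> z"
    unfolding JJ_def using Jn_expand[OF P s y0] unfolding Jn_def z_def by simp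
  show "ennreal (- Im (phi_repr \<gamma> \<sigma> (\<i> * complex_of_real y)) / y\<^sup>2) \<le> ennreal (C\<^sup>2 / 2) * JJ \<mu> y"
  proof -
    have "ennreal (- Im p / y\<^sup>2) = ennreal (v / 2) * Wn \<mu> w" by (rule f3e)
    also have "\<dots> \<le> ennreal (y / 2) * (ennreal (C\<^sup>2) * Wn \<mu> z)"
      using v2 W1 by (intro mult_mono ennreal_leI) auto
    also have "\<dots> = (ennreal (y / 2) * ennreal (C\<^sup>2)) * Wn \<mu> z" by (simp add: mult.assoc)
    also have "ennreal (y / 2) * ennreal (C\<^sup>2) = ennreal (C\<^sup>2 / 2) * ennreal y"
      using y0 by (simp add: ennreal_mult[symmetric] mult.commute del: ennreal_mult)
    finally show ?thesis unfolding JJe p_def z_def by (simp add: mult.assoc)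
  qed
  show "JJ \<mu> y \<le> ennreal (4 * C\<^sup>2) * ennreal (- Im (phi_repr \<gamma> \<sigma> (\<i> * complex_of_real y)) / y\<^sup>2)"
  proof -
    have "JJ \<mu> y = ennreal y * Wn \<mu> z" by (rule JJe)
    also have "\<dots> \<le> ennreal (2 * v) * (ennreal (C\<^sup>2) * Wn \<mu> w)"
      using v1 W2 by (intro mult_mono ennreal_leI) auto
    also have "\<dots> = (ennreal (2 * v) * ennreal (C\<^sup>2)) * Wn \<mu> w" by (simp add: mult.assoc)
    also have "ennreal (2 * v) * ennreal (C\<^sup>2) = ennreal (4 * C\<^sup>2) * ennreal (v / 2)"
      using v0 by (simp add: ennreal_mult[symmetric] mult.commute del: ennreal_mult)
    also have "ennreal (4 * C\<^sup>2) * ennreal (v / 2) * Wn \<mu> w = ennreal (4 * C\<^sup>2) * ennreal (- Im p / y\<^sup>2)"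
      unfolding f3e by (simp add: mult.assoc)
    finally show ?thesis unfolding p_def z_def .
  qed
qed

lemma P3_J:
  fixes \<mu> \<sigma> :: "real measure" and \<gamma> T :: real
  assumes fgp: "free_generating_pair \<mu> \<gamma> \<sigma>" and T: "T > 0"
  shows "(\<integral>\<^sup>+y\<in>{T<..}. ennreal (- Im (phi_repr \<gamma> \<sigma> (\<i> * complex_of_real y)) / y\<^sup>2) \<partial>lborel) < \<infinity>
     \<longleftrightarrow> (\<integral>\<^sup>+y\<in>{T<..}. JJ \<mu> y \<partial>lborel) < \<infinity>"
proof -
  have P: "prob_space \<mu>" and s: "sets \<mu> = sets borel" and sf: "finite_measure \<sigma>"
    and ss: "sets \<sigma> = sets borel"
    using fgp unfolding free_generating_pair_def by auto
  obtain \<alpha> \<beta> where ab: "\<alpha> > 0" "\<beta> > 0"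
    and cone: "\<And>z. Im z > \<beta> \<Longrightarrow> \<bar>Re z\<bar> < \<alpha> * Im z \<Longrightarrow>
        Im (z + phi_repr \<gamma> \<sigma> z) > 0 \<and> F_transform \<mu> (z + phi_repr \<gamma> \<sigma> z) = z"
    using fgp unfolding free_generating_pair_def by blast
  interpret \<sigma>: finite_measure \<sigma> by fact
  obtain Y0 where Y0: "Y0 \<ge> 1" "\<And>y. y \<ge> Y0 \<Longrightarrow> (\<integral>x. (1 + x\<^sup>2) / (x\<^sup>2 + y\<^sup>2) \<partial>\<sigma>) \<le> 1 / 2"
    using S_small[OF sf ss] by blast
  define Y where "Y = max (max T \<beta>) Y0"
  have TY: "T \<le> Y" unfolding Y_def by simp
  define K where "K = \<bar>\<gamma>\<bar> + measure \<sigma> (space \<sigma>)"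
  define C where "C = 8 * K\<^sup>2 + 4"
  define m where "m = measure \<sigma> (space \<sigma>)"
  have m0: "m \<ge> 0" unfolding m_def by simp
  have big: "ennreal (- Im (phi_repr \<gamma> \<sigma> (\<i> * complex_of_real y)) / y\<^sup>2) \<le> ennreal (C\<^sup>2 / 2) * JJ \<mu> y
           \<and> JJ \<mu> y \<le> ennreal (4 * C\<^sup>2) * ennreal (- Im (phi_repr \<gamma> \<sigma> (\<i> * complex_of_real y)) / y\<^sup>2)"
    if y: "Y < y" for y
  proof -
    have yb: "y > \<beta>" and yY0: "y \<ge> Y0" using y unfolding Y_def by auto
    have y1: "y \<ge> 1" using yY0 Y0(1) by simp
    have c: "Im (\<i> * complex_of_real y + phi_repr \<gamma> \<sigma> (\<i> * complex_of_real y)) > 0 \<and>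
        F_transform \<mu> (\<i> * complex_of_real y + phi_repr \<gamma> \<sigma> (\<i> * complex_of_real y)) = \<i> * complex_of_real y"
      using cone[of "\<i> * complex_of_real y"] yb ab y1 by simp
    show ?thesis
      using sub_point[OF P s sf ss y1 Y0(2)[OF yY0] conjunct1[OF c] conjunct2[OF c] K_def C_def] by simp
  qed
  have f3b: "ennreal (- Im (phi_repr \<gamma> \<sigma> (\<i> * complex_of_real y)) / y\<^sup>2) \<le> ennreal ((1 + 1 / T\<^sup>2) * m / T)"
    if y: "T < y" for y
  proof -
    have y0: "y > 0" using y T by simp
    have int1: "integrable \<sigma> (\<lambda>x. (1 + x\<^sup>2) / (x\<^sup>2 + y\<^sup>2))"
    proof -
      have "integrable \<sigma> (\<lambda>x. y * (1 + x\<^sup>2) / (x\<^sup>2 + y\<^sup>2) / y)"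
        using S_integrable[OF sf ss y0] by (rule integrable_divide)
      moreover have "(\<lambda>x. y * (1 + x\<^sup>2) / (x\<^sup>2 + y\<^sup>2) / y) = (\<lambda>x. (1 + x\<^sup>2) / (x\<^sup>2 + y\<^sup>2))"
        using y0 by (auto simp: fun_eq_iff)
      ultimately show ?thesis by simp
    qed
    have TT: "1 / y\<^sup>2 \<le> 1 / T\<^sup>2" using y T by (intro divide_left_mono power_mono) auto
    have "(\<integral>x. (1 + x\<^sup>2) / (x\<^sup>2 + y\<^sup>2) \<partial>\<sigma>) \<le> (\<integral>x. 1 + 1 / T\<^sup>2 \<partial>\<sigma>)"
    proof (intro integral_mono int1)
      fix x :: real
      show "(1 + x\<^sup>2) / (x\<^sup>2 + y\<^sup>2) \<le> 1 + 1 / T\<^sup>2" using frac1[OF y0, of x] TT by linarith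
    qed simp
    also have "\<dots> = (1 + 1 / T\<^sup>2) * m" unfolding m_def by simp
    finally have Sb: "(\<integral>x. (1 + x\<^sup>2) / (x\<^sup>2 + y\<^sup>2) \<partial>\<sigma>) \<le> (1 + 1 / T\<^sup>2) * m" .
    have "- Im (phi_repr \<gamma> \<sigma> (\<i> * complex_of_real y)) = (\<integral>x. y * ((1 + x\<^sup>2) / (x\<^sup>2 + y\<^sup>2)) \<partial>\<sigma>)"
      unfolding phi_Im[OF sf ss y0] by simp
    also have "\<dots> = y * (\<integral>x. (1 + x\<^sup>2) / (x\<^sup>2 + y\<^sup>2) \<partial>\<sigma>)" by (rule integral_mult_right_zero)
    finally have e: "- Im (phi_repr \<gamma> \<sigma> (\<i> * complex_of_real y)) / y\<^sup>2 = (\<integral>x. (1 + x\<^sup>2) / (x\<^sup>2 + y\<^sup>2) \<partial>\<sigma>) / y"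
      using y0 by (simp add: power2_eq_square)
    have "(\<integral>x. (1 + x\<^sup>2) / (x\<^sup>2 + y\<^sup>2) \<partial>\<sigma>) / y \<le> (1 + 1 / T\<^sup>2) * m / y"
      using Sb y0 by (intro divide_right_mono) auto
    also have "\<dots> \<le> (1 + 1 / T\<^sup>2) * m / T"
      using y T m0 by (intro divide_left_mono) (auto intro!: mult_nonneg_nonneg add_nonneg_nonneg)
    finally show ?thesis unfolding e by (rule ennreal_leI)
  qed
  have Jb: "JJ \<mu> y \<le> ennreal (4 / T)" if y: "T < y" for y
  proof -
    have y0: "y > 0" using y T by simp
    have "JJ \<mu> y = Jn \<mu> y" unfolding JJ_def using Jn_expand[OF P s y0] by simp
    also have "\<dots> \<le> ennreal (4 / y)" by (rule Jn_bound[OF P s y0])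
    also have "\<dots> \<le> ennreal (4 / T)" using y T by (intro ennreal_leI divide_left_mono) auto
    finally show ?thesis .
  qed
  have phim: "(\<lambda>y. phi_repr \<gamma> \<sigma> (\<i> * complex_of_real y)) \<in> borel_measurable borel"
  proof -
    have "(\<lambda>y. \<integral>x. (1 + complex_of_real x * (\<i> * complex_of_real y)) / (\<i> * complex_of_real y - complex_of_real x) \<partial>\<sigma>)
          \<in> borel_measurable borel"
      by (rule param_meas[OF finite_measure.axioms(1)[OF sf] ss]) measurable
    then show ?thesis unfolding phi_repr_def by measurable
  qed
  note [measurable] = phim
  have f3m: "(\<lambda>y. ennreal (- Im (phi_repr \<gamma> \<sigma> (\<i> * complex_of_real y)) / y\<^sup>2)) \<in> borel_measurable borel"
    by measurable
  show ?thesis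
  proof
    assume fin: "(\<integral>\<^sup>+y\<in>{T<..}. ennreal (- Im (phi_repr \<gamma> \<sigma> (\<i> * complex_of_real y)) / y\<^sup>2) \<partial>lborel) < \<infinity>"
    show "(\<integral>\<^sup>+y\<in>{T<..}. JJ \<mu> y \<partial>lborel) < \<infinity>"
      by (rule fin_cmp[OF f3m TY _ _ fin, where B="4 / T" and C="4 * C\<^sup>2"]) (use Jb big in auto)
  next
    assume fin: "(\<integral>\<^sup>+y\<in>{T<..}. JJ \<mu> y \<partial>lborel) < \<infinity>"
    show "(\<integral>\<^sup>+y\<in>{T<..}. ennreal (- Im (phi_repr \<gamma> \<sigma> (\<i> * complex_of_real y)) / y\<^sup>2) \<partial>lborel) < \<infinity>"
      by (rule fin_cmp[OF JJ_meas[OF P s] TY _ _ fin, where B="(1 + 1 / T\<^sup>2) * m / T" and C="C\<^sup>2 / 2"])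
        (use f3b big in auto)
  qed
qed

theorem theorem6p1:
  fixes \<mu> \<sigma> :: "real measure" and \<gamma> T :: real
  assumes "free_generating_pair \<mu> \<gamma> \<sigma>"
    and "T > 0"
  shows "((\<integral>\<^sup>+ x. ennreal (ln (1 + x\<^sup>2)) \<partial>\<mu>) < \<infinity>
            \<longleftrightarrow> (\<integral>\<^sup>+ x. ennreal (ln (1 + x\<^sup>2)) \<partial>\<sigma>) < \<infinity>)
       \<and> ((\<integral>\<^sup>+ x. ennreal (ln (1 + x\<^sup>2)) \<partial>\<sigma>) < \<infinity>
            \<longleftrightarrow> (\<integral>\<^sup>+ y\<in>{T<..}. ennreal (- Im (phi_repr \<gamma> \<sigma> (\<i> * complex_of_real y)) / y\<^sup>2) \<partial>lborel) < \<infinity>)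
       \<and> ((\<integral>\<^sup>+ y\<in>{T<..}. ennreal (- Im (phi_repr \<gamma> \<sigma> (\<i> * complex_of_real y)) / y\<^sup>2) \<partial>lborel) < \<infinity>
            \<longleftrightarrow> (\<integral>\<^sup>+ y\<in>{0<..<1/T}. ennreal (Im (R_transform \<gamma> \<sigma> (\<i> * complex_of_real y))) \<partial>lborel) < \<infinity>)
       \<and> ((\<integral>\<^sup>+ y\<in>{0<..<1/T}. ennreal (Im (R_transform \<gamma> \<sigma> (\<i> * complex_of_real y))) \<partial>lborel) < \<infinity>
            \<longleftrightarrow> (\<integral>\<^sup>+ y\<in>{T<..}. ennreal ((Im (F_transform \<mu> (\<i> * complex_of_real y)) - y) / y\<^sup>2) \<partial>lborel) < \<infinity>)"
proof -
  have P: "prob_space \<mu>" and s: "sets \<mu> = sets borel" and sf: "finite_measure \<sigma>"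
    and ss: "sets \<sigma> = sets borel"
    using assms(1) unfolding free_generating_pair_def by auto
  note T = assms(2)
  have e23: "(\<integral>\<^sup>+y\<in>{T<..}. ennreal (- Im (phi_repr \<gamma> \<sigma> (\<i> * complex_of_real y)) / y\<^sup>2) \<partial>lborel) < \<infinity>
     \<longleftrightarrow> (\<integral>\<^sup>+x. ennreal (ln (1 + x\<^sup>2)) \<partial>\<sigma>) < \<infinity>" by (rule P3_iff[OF sf ss T])
  have e24: "(\<integral>\<^sup>+y\<in>{0<..<1/T}. ennreal (Im (R_transform \<gamma> \<sigma> (\<i> * complex_of_real y))) \<partial>lborel) < \<infinity>
     \<longleftrightarrow> (\<integral>\<^sup>+x. ennreal (ln (1 + x\<^sup>2)) \<partial>\<sigma>) < \<infinity>" by (rule P4_iff[OF sf ss T])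
  have e3J: "(\<integral>\<^sup>+y\<in>{T<..}. ennreal (- Im (phi_repr \<gamma> \<sigma> (\<i> * complex_of_real y)) / y\<^sup>2) \<partial>lborel) < \<infinity>
     \<longleftrightarrow> (\<integral>\<^sup>+y\<in>{T<..}. JJ \<mu> y \<partial>lborel) < \<infinity>" by (rule P3_J[OF assms(1) T])
  have e5J: "(\<integral>\<^sup>+y\<in>{T<..}. ennreal ((Im (F_transform \<mu> (\<i> * complex_of_real y)) - y) / y\<^sup>2) \<partial>lborel) < \<infinity>
     \<longleftrightarrow> (\<integral>\<^sup>+y\<in>{T<..}. JJ \<mu> y \<partial>lborel) < \<infinity>" by (rule P5_iff[OF P s T])
  have e1J: "(\<integral>\<^sup>+x. ennreal (ln (1 + x\<^sup>2)) \<partial>\<mu>) < \<infinity> \<longleftrightarrow> (\<integral>\<^sup>+y\<in>{T<..}. JJ \<mu> y \<partial>lborel) < \<infinity>"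
    unfolding Jn_JJ[OF P s T, symmetric] using PJ_fwd[OF P s T] PJ_bwd[OF P s T] by blast
  show ?thesis using e23 e24 e3J e5J e1J by blast
qed

end
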